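(* Let $(\beta,\gamma)\in[0,\infty)\times[2,\infty)$ and $G\in\mathcal S_{\beta,\gamma}$. Then there exists $C>0$ such that $\sup_{x\in\mathbb Z}|\Theta(n)\mathcal K_{n,\beta}G(\tfrac xn)|\le C$ for all $n\ge1$, and $$\lim_{n\to\infty}\frac1n\sum_{x\in\mathbb Z}\big|\Theta(n)\mathcal K_{n,\beta}G(\tfrac xn)-\kappa_\gamma\Delta G(\tfrac xn)\big|=0.$$
   Context: Fix $\gamma\ge2$, $\alpha>0$, $\beta\ge0$. Let $p(0)=0$, $p(x)=c_\gamma|x|^{-\gamma-1}$ ($x\ne0$), $c_\gamma$ normalizing so $\sum_xp(x)=1$; $m=\sum_{x\ge1}xp(x)$, $\sigma^2=\sum_xx^2p(x)$ when $\gamma>2$, $\kappa_\gamma=c_2$ if $\gamma=2$ and $\sigma^2/2$ if $\gamma>2$, $\hat\alpha=\alpha m/\kappa_\gamma$. $\Theta(n)=n^2$ if $\gamma>2$, $n^2/\log n$ if $\gamma=2$. Test functions: $G=\mathbb 1_{\{u<0\}}G_-+\mathbb 1_{\{u\ge0\}}G_+$ with $G_\pm$ Schwartz (for $G\in\mathcal S(\mathbb R)$, $G_\pm=G$); $\mathcal S_{Neu}(\mathbb R^* )$: $G_\pm^{(2k+1)}(0)=0$ for all $k\ge0$; $\mathcal S_{Rob}(\mathbb R^* )$: $G_-^{(2k+1)}(0)=G_+^{(2k+1)}(0)=\hat\alpha[G_+^{(2k)}(0)-G_-^{(2k)}(0)]$ for all $k\ge0$. $\mathcal S_{\beta,\gamma}=\mathcal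 S(\mathbb R)$ (Schwartz space) if $\beta<1$, $\mathcal S_{Rob}(\mathbb R^* )$ if $\beta=1,\gamma>2$, $\mathcal S_{Neu}(\mathbb R^* )$ otherwise. $\Delta G$ denotes the piecewise second derivative: $\Delta G(u)=G_-''(u)$ for $u<0$, $G_+''(u)$ for $u\ge0$. Operator: if $\beta\in[0,1)$, $\mathcal K_{n,\beta}G(\tfrac xn)=\sum_{r\in\mathbb Z}[G(\tfrac{x+r}n)-G(\tfrac xn)]p(r)$; if $\beta\ge1$, $\mathcal K_{n,\beta}G(\tfrac xn)=\sum_{y\ge0}[G(\tfrac yn)-G(\tfrac xn)-n^{-1}G_+'(0)(y-x)]p(y-x)$ for $x\ge0$ and $\mathcal K_{n,\beta}G(\tfrac xn)=\sum_{y\le-1}[G(\tfrac yn)-G(\tfrac xn)-n^{-1}G_-'(0)(y-x)]p(y-x)$ for $x\le-1$. *)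

theory Defs
  imports "HOL-Analysis.Analysis"
begin

definition c_gam :: "real \<Rightarrow> real" where
  "c_gam \<gamma> = 1 / (2 * (\<Sum>\<^sub>\<infinity>x\<in>{1::int..}. \<bar>real_of_int x\<bar> powr (-\<gamma> - 1)))"

definition pker :: "real \<Rightarrow> int \<Rightarrow> real" where
  "pker \<gamma> x = (if x = 0 then 0 else c_gam \<gamma> * \<bar>real_of_int x\<bar> powr (-\<gamma> - 1))"

definition m_gam :: "real \<Rightarrow> real" where
  "m_gam \<gamma> = (\<Sum>\<^sub>\<infinity>x\<in>{1::int..}. real_of_int x * pker \<gamma> x)"

definition sigma2 :: "real \<Rightarrow> real" where
  "sigma2 \<gamma> = (\<Sum>\<^sub>\<infinity>x\<in>(UNIV::int set). (real_of_int x)^2 * pker \<gamma> x)"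

definition kappa :: "real \<Rightarrow> real" where
  "kappa \<gamma> = (if \<gamma> = 2 then c_gam 2 else sigma2 \<gamma> / 2)"

definition alpha_hat :: "real \<Rightarrow> real \<Rightarrow> real" where
  "alpha_hat \<alpha> \<gamma> = \<alpha> * m_gam \<gamma> / kappa \<gamma>"

text \<open>Time scaling; for gamma = 2 and n = 1 the value n^2/ln n is 0 in HOL (division by 0).\<close>
definition Theta :: "real \<Rightarrow> nat \<Rightarrow> real" where
  "Theta \<gamma> n = (if \<gamma> > 2 then real n ^ 2 else real n ^ 2 / ln (real n))"

definition schwartz :: "(real \<Rightarrow> real) \<Rightarrow> bool" where
  "schwartz f \<longleftrightarrow>
     (\<forall>k x. ((deriv ^^ k) f) differentiable (at x)) \<and>
     (\<forall>j k. \<exists>C. \<forall>x. \<bar>x\<bar> ^ j * \<bar>(deriv ^^ k) f x\<bar> \<le> C)"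

text \<open>A test function is given by the pair (G_-, G_+); G u = G_- u for u<0, G_+ u for u>=0.\<close>
definition glue :: "(real \<Rightarrow> real) \<Rightarrow> (real \<Rightarrow> real) \<Rightarrow> real \<Rightarrow> real" where
  "glue Gm Gp u = (if u < 0 then Gm u else Gp u)"

definition lapl :: "(real \<Rightarrow> real) \<Rightarrow> (real \<Rightarrow> real) \<Rightarrow> real \<Rightarrow> real" where
  "lapl Gm Gp u = (if u < 0 then deriv (deriv Gm) u else deriv (deriv Gp) u)"

definition S_R :: "(real \<Rightarrow> real) \<Rightarrow> (real \<Rightarrow> real) \<Rightarrow> bool" where
  "S_R Gm Gp \<longleftrightarrow> schwartz Gp \<and> Gm = Gp"

definition S_Neu :: "(real \<Rightarrow> real) \<Rightarrow> (real \<Rightarrow> real) \<Rightarrow> bool" where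
  "S_Neu Gm Gp \<longleftrightarrow> schwartz Gm \<and> schwartz Gp \<and>
     (\<forall>k. (deriv ^^ (2*k+1)) Gm 0 = 0 \<and> (deriv ^^ (2*k+1)) Gp 0 = 0)"

definition S_Rob :: "real \<Rightarrow> (real \<Rightarrow> real) \<Rightarrow> (real \<Rightarrow> real) \<Rightarrow> bool" where
  "S_Rob ah Gm Gp \<longleftrightarrow> schwartz Gm \<and> schwartz Gp \<and>
     (\<forall>k. (deriv ^^ (2*k+1)) Gm 0 = ah * ((deriv ^^ (2*k)) Gp 0 - (deriv ^^ (2*k)) Gm 0) \<and>
          (deriv ^^ (2*k+1)) Gp 0 = ah * ((deriv ^^ (2*k)) Gp 0 - (deriv ^^ (2*k)) Gm 0))"

definition S_class :: "real \<Rightarrow> real \<Rightarrow> real \<Rightarrow> (real \<Rightarrow> real) \<Rightarrow> (real \<Rightarrow> real) \<Rightarrow> bool" where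
  "S_class \<alpha> \<beta> \<gamma> Gm Gp =
     (if \<beta> < 1 then S_R Gm Gp
      else if \<beta> = 1 \<and> \<gamma> > 2 then S_Rob (alpha_hat \<alpha> \<gamma>) Gm Gp
      else S_Neu Gm Gp)"

definition Kop :: "real \<Rightarrow> real \<Rightarrow> (real \<Rightarrow> real) \<Rightarrow> (real \<Rightarrow> real) \<Rightarrow> nat \<Rightarrow> int \<Rightarrow> real" where
  "Kop \<beta> \<gamma> Gm Gp n x =
    (let G = glue Gm Gp; N = real n in
     if \<beta> < 1 then
       (\<Sum>\<^sub>\<infinity>r\<in>(UNIV::int set). (G ((x + r) / N) - G (x / N)) * pker \<gamma> r)
     else if x \<ge> 0 then
       (\<Sum>\<^sub>\<infinity>y\<in>{0::int..}. (G (y / N) - G (x / N) - deriv Gp 0 * (y - x) / N) * pker \<gamma> (y - x))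
     else
       (\<Sum>\<^sub>\<infinity>y\<in>{..-1::int}. (G (y / N) - G (x / N) - deriv Gm 0 * (y - x) / N) * pker \<gamma> (y - x)))"

end

theory Submission
  imports Defs
begin

lemma nat_powr_summable_on:
  assumes "s < -1"
  shows "(\<lambda>k::nat. real k powr s) summable_on UNIV"
  using assms summable_on_UNIV_nonneg_real_iff[of "\<lambda>k::nat. real k powr s"] summable_real_powr_iff
  by simp

lemma U1: "(UNIV::int set) = int ` UNIV \<union> (\<lambda>k. - int k) ` UNIV"
proof (rule set_eqI, rule iffI)
  fix r :: int
  show "r \<in> int ` UNIV \<union> (\<lambda>k. - int k) ` UNIV"
  proof (cases "r \<ge> 0")
    case True then have "r = int (nat r)" by simp
    then show ?thesis by blast
  next
    case False then have "r = - int (nat (-r))" by simp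
    then show ?thesis by blast
  qed
qed simp
lemma U2: "(UNIV::int set) = {0} \<union> (int ` {1..} \<union> (\<lambda>k. - int k) ` {1..})"
proof (rule set_eqI, rule iffI)
  fix r :: int
  show "r \<in> {0} \<union> (int ` {1..} \<union> (\<lambda>k. - int k) ` {1..})"
  proof (cases "r > 0")
    case True then have "r = int (nat r)" "nat r \<in> {1..}" by auto
    then show ?thesis by blast
  next
    case False
    show ?thesis
    proof (cases "r = 0")
      case False
      then have "r = - int (nat (-r))" "nat (-r) \<in> {1..}" using \<open>\<not> r > 0\<close> by auto
      then show ?thesis by blast
    qed simp
  qed
qed simp
lemma int_powr_summable_on:
  assumes "s < -1"
  shows "(\<lambda>r::int. \<bar>real_of_int r\<bar> powr s) summable_on UNIV"
proof -
  note U = U1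
  have 1: "(\<lambda>r::int. \<bar>real_of_int r\<bar> powr s) summable_on int ` UNIV"
    by (subst summable_on_reindex) (use nat_powr_summable_on[OF assms] in \<open>auto simp: o_def\<close>)
  have 2: "(\<lambda>r::int. \<bar>real_of_int r\<bar> powr s) summable_on (\<lambda>k. - int k) ` UNIV"
    by (subst summable_on_reindex) (use nat_powr_summable_on[OF assms] in \<open>auto simp: o_def inj_on_def\<close>)
  show ?thesis using summable_on_union[OF 1 2] U by simp
qed

lemma sym_split:
  fixes f :: "int \<Rightarrow> real"
  assumes "f summable_on UNIV"
  shows "(\<lambda>k::nat. f (int k) + f (- int k)) summable_on {1..}"
    and "infsum f UNIV = f 0 + infsum (\<lambda>k::nat. f (int k) + f (- int k)) {1..}"
proof -
  note U = U2
  have i1: "inj_on int {1..}" by (auto simp: inj_on_def)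
  have i2: "inj_on (\<lambda>k::nat. - int k) {1..}" by (auto simp: inj_on_def)
  have s1: "f summable_on int ` {1..}" by (rule summable_on_subset_banach[OF assms]) auto
  have s2: "f summable_on (\<lambda>k. - int k) ` {1..}" by (rule summable_on_subset_banach[OF assms]) auto
  have t1: "(\<lambda>k::nat. f (int k)) summable_on {1..}"
    using s1 summable_on_reindex[OF i1, of f] by (simp add: o_def)
  have t2: "(\<lambda>k::nat. f (- int k)) summable_on {1..}"
    using s2 summable_on_reindex[OF i2, of f] by (simp add: o_def)
  show "(\<lambda>k::nat. f (int k) + f (- int k)) summable_on {1..}"
    by (rule summable_on_add[OF t1 t2])
  have d: "int ` {1..} \<inter> (\<lambda>k. - int k) ` {1..} = {}" by auto
  have "infsum f UNIV = infsum f {0} + infsum f (int ` {1..} \<union> (\<lambda>k. - int k) ` {1..})"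
    by (subst U, rule infsum_Un_disjoint) (use summable_on_union[OF s1 s2] in auto)
  also have "infsum f (int ` {1..} \<union> (\<lambda>k. - int k) ` {1..}) = infsum f (int ` {1..}) + infsum f ((\<lambda>k. - int k) ` {1..})"
    by (rule infsum_Un_disjoint[OF s1 s2 d])
  also have "infsum f (int ` {1..}) = infsum (\<lambda>k::nat. f (int k)) {1..}"
    using infsum_reindex[OF i1, of f] by (simp add: o_def)
  also have "infsum f ((\<lambda>k. - int k) ` {1..}) = infsum (\<lambda>k::nat. f (- int k)) {1..}"
    using infsum_reindex[OF i2, of f] by (simp add: o_def)
  also have "infsum (\<lambda>k::nat. f (int k)) {1..} + infsum (\<lambda>k::nat. f (- int k)) {1..}
      = infsum (\<lambda>k::nat. f (int k) + f (- int k)) {1..}"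
    by (rule infsum_add[symmetric, OF t1 t2])
  finally show "infsum f UNIV = f 0 + infsum (\<lambda>k::nat. f (int k) + f (- int k)) {1..}" by simp
qed

lemma Zsum_pos:
  assumes "\<gamma> > 0"
  shows "(\<Sum>\<^sub>\<infinity>x\<in>{1::int..}. \<bar>real_of_int x\<bar> powr (-\<gamma> - 1)) \<ge> 1"
proof -
  have s: "(\<lambda>x::int. \<bar>real_of_int x\<bar> powr (-\<gamma> - 1)) summable_on {1..}"
    by (rule summable_on_subset_banach[OF int_powr_summable_on]) (use assms in auto)
  have "sum (\<lambda>x::int. \<bar>real_of_int x\<bar> powr (-\<gamma> - 1)) {1} \<le> (\<Sum>\<^sub>\<infinity>x\<in>{1::int..}. \<bar>real_of_int x\<bar> powr (-\<gamma> - 1))"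
    by (rule finite_sum_le_infsum[OF s]) auto
  then show ?thesis by simp
qed

lemma c_gam_pos: "\<gamma> > 0 \<Longrightarrow> c_gam \<gamma> > 0"
  unfolding c_gam_def using Zsum_pos[of \<gamma>] by simp

lemma pker_nonneg: "\<gamma> > 0 \<Longrightarrow> pker \<gamma> r \<ge> 0"
  unfolding pker_def using c_gam_pos[of \<gamma>] by simp

lemma pker_sym: "pker \<gamma> (- r) = pker \<gamma> r"
  unfolding pker_def by simp

lemma pker_0[simp]: "pker \<gamma> 0 = 0"
  unfolding pker_def by simp

lemma pker_nat: "pker \<gamma> (int k) = c_gam \<gamma> * real k powr (-\<gamma> - 1)"
  unfolding pker_def by simp

lemma pker_mom_eq:
  "\<bar>real_of_int r\<bar> ^ j * pker \<gamma> r = c_gam \<gamma> * \<bar>real_of_int r\<bar> powr (real j - \<gamma> - 1)"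
proof (cases "r = 0")
  case True then show ?thesis by (cases j) auto
next
  case False
  then have "\<bar>real_of_int r\<bar> > 0" by simp
  then have "\<bar>real_of_int r\<bar> ^ j = \<bar>real_of_int r\<bar> powr real j" by (simp add: powr_realpow)
  then show ?thesis using False \<open>\<bar>real_of_int r\<bar> > 0\<close>
    by (simp add: pker_def powr_add[symmetric] algebra_simps)
qed

lemma pker_mom_summable:
  assumes "real j < \<gamma>"
  shows "(\<lambda>r::int. \<bar>real_of_int r\<bar> ^ j * pker \<gamma> r) summable_on UNIV"
  unfolding pker_mom_eq
  by (rule summable_on_cmult_right, rule int_powr_summable_on) (use assms in auto)

lemma pker_mom_summable_nat:
  assumes "real j < \<gamma>"
  shows "(\<lambda>k::nat. real k ^ j * pker \<gamma> (int k)) summable_on A"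
proof -
  have "(\<lambda>r::int. \<bar>real_of_int r\<bar> ^ j * pker \<gamma> r) summable_on int ` UNIV"
    by (rule summable_on_subset_banach[OF pker_mom_summable[OF assms]]) auto
  then have "(\<lambda>k::nat. real k ^ j * pker \<gamma> (int k)) summable_on UNIV"
    by (subst (asm) summable_on_reindex) (auto simp: o_def)
  then show ?thesis by (rule summable_on_subset_banach) auto
qed

lemma pker_summable_nat:
  assumes "\<gamma> > 0"
  shows "(\<lambda>k::nat. pker \<gamma> (int k)) summable_on A"
  using pker_mom_summable_nat[of 0 \<gamma> A] assms by simp

lemma pker_summable:
  assumes "\<gamma> > 0"
  shows "(\<lambda>r::int. pker \<gamma> r) summable_on A"
  using pker_mom_summable[of 0 \<gamma>] assms by (auto intro: summable_on_subset_banach)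

lemma kappa_gt2:
  assumes "\<gamma> > 2"
  shows "kappa \<gamma> = (\<Sum>\<^sub>\<infinity>k\<in>{1::nat..}. real k ^ 2 * pker \<gamma> (int k))"
proof -
  have s: "(\<lambda>r::int. (real_of_int r)^2 * pker \<gamma> r) summable_on UNIV"
    using pker_mom_summable[of 2 \<gamma>] assms by simp
  have e: "(\<lambda>k::nat. (real_of_int (int k))^2 * pker \<gamma> (int k) + (real_of_int (- int k))^2 * pker \<gamma> (- int k))
     = (\<lambda>k. 2 * (real k ^ 2 * pker \<gamma> (int k)))"
    by (rule ext) (simp only: pker_sym, simp)
  have "sigma2 \<gamma> = (\<lambda>r::int. (real_of_int r)^2 * pker \<gamma> r) 0 + (\<Sum>\<^sub>\<infinity>k\<in>{1::nat..}. (real_of_int (int k))^2 * pker \<gamma> (int k) + (real_of_int (- int k))^2 * pker \<gamma> (- int k))"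
    unfolding sigma2_def by (rule sym_split(2)[OF s])
  also have "\<dots> = (\<Sum>\<^sub>\<infinity>k\<in>{1::nat..}. 2 * (real k ^ 2 * pker \<gamma> (int k)))"
    by (simp only: e) simp
  also have "\<dots> = 2 * (\<Sum>\<^sub>\<infinity>k\<in>{1::nat..}. real k ^ 2 * pker \<gamma> (int k))"
    by (rule infsum_cmult_right')
  finally show ?thesis using assms unfolding kappa_def by simp
qed

lemma infsum_le_bound:
  fixes f :: "'a \<Rightarrow> real"
  assumes nn: "\<And>x. x \<in> A \<Longrightarrow> f x \<ge> 0"
    and bd: "\<And>F. finite F \<Longrightarrow> F \<subseteq> A \<Longrightarrow> sum f F \<le> B"
  shows "f summable_on A" "infsum f A \<le> B"
proof -
  have bdd: "bdd_above (sum f ` {F. F \<subseteq> A \<and> finite F})"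
    using bd by (auto simp: bdd_above_def)
  show "f summable_on A" by (rule nonneg_bdd_above_summable_on[OF _ bdd]) (use nn in auto)
  have "infsum f A = (SUP F\<in>{F. finite F \<and> F\<subseteq>A}. sum f F)"
    by (rule nonneg_bdd_above_infsum[OF _ bdd]) (use nn in auto)
  also have "\<dots> \<le> B"
    by (rule cSUP_least) (auto intro: bd)
  finally show "infsum f A \<le> B" .
qed

lemma tail_tendsto:
  fixes f :: "nat \<Rightarrow> real"
  assumes s: "f summable_on UNIV" and nn: "\<And>k. f k \<ge> 0"
  shows "(\<lambda>n. infsum f {n<..}) \<longlonglongrightarrow> 0"
proof -
  have sums: "f sums (infsum f UNIV)" by (rule has_sum_imp_sums) (use s in simp)
  then have L: "(\<lambda>n. sum f {..<Suc n}) \<longlonglongrightarrow> infsum f UNIV"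
    unfolding sums_def by (rule LIMSEQ_Suc)
  have eq: "infsum f {n<..} = infsum f UNIV - sum f {..<Suc n}" for n
  proof -
    have U: "(UNIV::nat set) = {..n} \<union> {n<..}" by auto
    have "infsum f UNIV = infsum f ({..n} \<union> {n<..})" by (subst U) (rule refl)
    also have "\<dots> = infsum f {..n} + infsum f {n<..}"
      by (rule infsum_Un_disjoint) (auto intro: summable_on_subset_banach[OF s])
    finally show ?thesis using lessThan_Suc_atMost by simp
  qed
  have "(\<lambda>n. infsum f UNIV - sum f {..<Suc n}) \<longlonglongrightarrow> infsum f UNIV - infsum f UNIV"
    by (intro tendsto_intros L)
  then show ?thesis by (simp add: eq)
qed

lemma cesaro0:
  fixes g :: "nat \<Rightarrow> real"
  assumes lim: "g \<longlonglongrightarrow> 0" and nn: "\<And>k. g k \<ge> 0"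
  shows "(\<lambda>n. (\<Sum>k\<in>{1..n}. g k) / real n) \<longlonglongrightarrow> 0"
proof (rule LIMSEQ_I)
  fix \<epsilon> :: real assume e: "\<epsilon> > 0"
  obtain N where N: "\<And>k. k \<ge> N \<Longrightarrow> g k < \<epsilon> / 2"
    using LIMSEQ_D[OF lim, of "\<epsilon>/2"] e nn by (metis abs_of_nonneg diff_zero half_gt_zero real_norm_def)
  define A where "A = (\<Sum>k<Suc N. g k)"
  have A0: "A \<ge> 0" unfolding A_def by (intro sum_nonneg nn)
  obtain M :: nat where M: "real M > 2 * A / \<epsilon>" using reals_Archimedean2 by blast
  show "\<exists>no. \<forall>n\<ge>no. norm ((\<Sum>k\<in>{1..n}. g k) / real n - 0) < \<epsilon>"
  proof (intro exI allI impI)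
    fix n assume n: "n \<ge> Suc (M + N)"
    have npos: "real n > 0" using n by simp
    have "(\<Sum>k\<in>{1..n}. g k) \<le> (\<Sum>k\<in>{..<Suc N} \<union> {Suc N..n}. g k)"
      by (rule sum_mono2) (auto intro: nn)
    also have "\<dots> = A + (\<Sum>k\<in>{Suc N..n}. g k)"
      unfolding A_def by (rule sum.union_disjoint) auto
    also have "(\<Sum>k\<in>{Suc N..n}. g k) \<le> (\<Sum>k\<in>{Suc N..n}. \<epsilon>/2)"
      by (rule sum_mono) (use N in \<open>fastforce intro: less_imp_le\<close>)
    also have "\<dots> \<le> real n * (\<epsilon>/2)"
      using e n by (simp add: mult_right_mono)
    finally have S: "(\<Sum>k\<in>{1..n}. g k) \<le> A + real n * (\<epsilon>/2)" by simp
    have S0: "(\<Sum>k\<in>{1..n}. g k) \<ge> 0" by (intro sum_nonneg nn)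
    have "A < real n * (\<epsilon>/2)"
    proof -
      have "2 * A / \<epsilon> < real n" using M n by linarith
      then have "2 * A < real n * \<epsilon>" using e by (simp add: field_simps)
      then show ?thesis by simp
    qed
    then have "(\<Sum>k\<in>{1..n}. g k) < real n * \<epsilon>" using S by linarith
    then have "(\<Sum>k\<in>{1..n}. g k) / real n < \<epsilon>" using npos by (simp add: field_simps)
    then show "norm ((\<Sum>k\<in>{1..n}. g k) / real n - 0) < \<epsilon>" using S0 npos by simp
  qed
qed

definition th :: "real \<Rightarrow> nat \<Rightarrow> real" where
  "th \<gamma> n = (if \<gamma> > 2 then 1 else 1 / ln (real n))"
definition Sn :: "real \<Rightarrow> nat \<Rightarrow> real" where
  "Sn \<gamma> n = (\<Sum>k\<in>{1..n}. real k ^ 2 * pker \<gamma> (int k))"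
definition aseq :: "real \<Rightarrow> nat \<Rightarrow> real" where
  "aseq \<gamma> n = th \<gamma> n * (\<Sum>k\<in>{1..n}. pker \<gamma> (int k) * real k ^ 3) / real n"
definition bseq :: "real \<Rightarrow> nat \<Rightarrow> real" where
  "bseq \<gamma> n = th \<gamma> n * real n ^ 2 * infsum (\<lambda>k. pker \<gamma> (int k)) {n<..}"
definition dseq :: "real \<Rightarrow> nat \<Rightarrow> real" where
  "dseq \<gamma> n = infsum (\<lambda>k. real k ^ 2 * pker \<gamma> (int k)) {n<..}"

lemma Theta_eq: "Theta \<gamma> n = real n ^ 2 * th \<gamma> n"
  unfolding Theta_def th_def by simp

lemma th_nonneg: "th \<gamma> n \<ge> 0"
  unfolding th_def by (cases n) auto

lemma inv_ln_tendsto: "(\<lambda>n. 1 / ln (real n)) \<longlonglongrightarrow> 0"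
proof -
  have "filterlim (\<lambda>n. ln (real n)) at_top sequentially"
    by (rule filterlim_compose[OF ln_at_top filterlim_real_sequentially])
  then have "filterlim (\<lambda>n. ln (real n)) at_infinity sequentially"
    by (rule filterlim_mono[OF _ at_top_le_at_infinity order_refl])
  then show ?thesis by (intro tendsto_divide_0[OF tendsto_const])
qed

lemma pker2: "k \<ge> 1 \<Longrightarrow> pker 2 (int k) = c_gam 2 / real k ^ 3"
proof -
  assume k: "k \<ge> 1"
  have "real k powr (-2 - 1) = real k powr (- 3)" by simp
  also have "\<dots> = 1 / real k ^ 3" by (simp add: powr_minus_divide)
  finally show ?thesis by (simp add: pker_nat)
qed

lemma F4:
  assumes "\<gamma> > 2"
  shows "dseq \<gamma> \<longlonglongrightarrow> 0"
  unfolding dseq_def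
  by (rule tail_tendsto[OF pker_mom_summable_nat]) (use assms pker_nonneg[of \<gamma>] in auto)

lemma F3:
  assumes "\<gamma> \<ge> 2"
  shows "(\<lambda>n. th \<gamma> n * Sn \<gamma> n) \<longlonglongrightarrow> kappa \<gamma>"
proof (cases "\<gamma> > 2")
  case True
  define f where "f = (\<lambda>k::nat. real k ^ 2 * pker \<gamma> (int k))"
  have s: "f summable_on UNIV" unfolding f_def by (rule pker_mom_summable_nat) (use True in auto)
  have sums: "f sums (infsum f UNIV)" by (rule has_sum_imp_sums) (use s in simp)
  then have L: "(\<lambda>n. sum f {..<Suc n}) \<longlonglongrightarrow> infsum f UNIV"
    unfolding sums_def by (rule LIMSEQ_Suc)
  have e1: "sum f {..<Suc n} = Sn \<gamma> n" for n
  proof -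
    have "sum f {..<Suc n} = sum f {0..n}" by (simp add: atLeast0AtMost lessThan_Suc_atMost)
    also have "\<dots> = f 0 + sum f {1..n}" by (simp add: sum.atLeast_Suc_atMost)
    finally show ?thesis unfolding Sn_def f_def by simp
  qed
  have e2: "infsum f UNIV = kappa \<gamma>"
    unfolding kappa_gt2[OF True] f_def
    by (rule infsum_cong_neutral) auto
  show ?thesis using L unfolding e1 e2 th_def using True by simp
next
  case False
  then have g: "\<gamma> = 2" using assms by simp
  have e: "th \<gamma> n * Sn \<gamma> n = c_gam 2 * (harm n / ln (real n))" if "n \<ge> 1" for n
  proof -
    have "Sn \<gamma> n = (\<Sum>k\<in>{1..n}. c_gam 2 * inverse (real k))"
      unfolding Sn_def g by (rule sum.cong) (auto simp: pker2 power_eq_if divide_simps)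
    also have "\<dots> = c_gam 2 * harm n" by (simp add: harm_def sum_distrib_left)
    finally show ?thesis unfolding th_def g by simp
  qed
  have h: "(\<lambda>n. harm n / ln (real n) :: real) \<longlonglongrightarrow> 1"
  proof -
    have "(\<lambda>n. 1 + (harm n - ln (real n)) * (1 / ln (real n)) :: real) \<longlonglongrightarrow> 1 + euler_mascheroni * 0"
      by (intro tendsto_intros euler_mascheroni_LIMSEQ inv_ln_tendsto)
    moreover have "eventually (\<lambda>n. 1 + (harm n - ln (real n)) * (1 / ln (real n)) = harm n / ln (real n)) sequentially"
    proof (rule eventually_sequentiallyI[of 2])
      fix n :: nat assume "n \<ge> 2"
      then have "ln (real n) > 0" by simp
      then show "1 + (harm n - ln (real n)) * (1 / ln (real n)) = harm n / ln (real n)"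
        by (simp add: field_simps)
    qed
    ultimately show ?thesis by (simp add: tendsto_cong)
  qed
  have "(\<lambda>n. c_gam 2 * (harm n / ln (real n))) \<longlonglongrightarrow> c_gam 2 * 1"
    by (intro tendsto_intros h)
  moreover have "eventually (\<lambda>n. c_gam 2 * (harm n / ln (real n)) = th \<gamma> n * Sn \<gamma> n) sequentially"
    by (rule eventually_sequentiallyI[of 1]) (simp add: e)
  ultimately show ?thesis using g by (simp add: tendsto_cong kappa_def)
qed

lemma F1:
  assumes "\<gamma> \<ge> 2"
  shows "aseq \<gamma> \<longlonglongrightarrow> 0"
proof (cases "\<gamma> > 2")
  case True
  define g where "g = (\<lambda>k::nat. pker \<gamma> (int k) * real k ^ 3)"
  have ge: "g k = c_gam \<gamma> * real k powr (2 - \<gamma>)" for k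
    using pker_mom_eq[of "int k" 3 \<gamma>] unfolding g_def by (simp add: mult.commute)
  have "(\<lambda>k. c_gam \<gamma> * real k powr (2 - \<gamma>)) \<longlonglongrightarrow> c_gam \<gamma> * 0"
    by (intro tendsto_intros tendsto_neg_powr filterlim_real_sequentially) (use True in auto)
  moreover have "g = (\<lambda>k. c_gam \<gamma> * real k powr (2 - \<gamma>))" by (rule ext) (rule ge)
  ultimately have "g \<longlonglongrightarrow> 0" by simp
  moreover have "\<And>k. g k \<ge> 0" unfolding g_def using pker_nonneg[of \<gamma>] True by simp
  ultimately have "(\<lambda>n. (\<Sum>k\<in>{1..n}. g k) / real n) \<longlonglongrightarrow> 0" by (rule cesaro0)
  then show ?thesis unfolding aseq_def th_def g_def using True by simp
next
  case False
  then have g: "\<gamma> = 2" using assms by simp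
  have e: "aseq \<gamma> n = c_gam 2 * (1 / ln (real n))" if "n \<ge> 1" for n
  proof -
    have "(\<Sum>k\<in>{1..n}. pker \<gamma> (int k) * real k ^ 3) = (\<Sum>k\<in>{1..n}. c_gam 2)"
      unfolding g by (rule sum.cong) (auto simp: pker2)
    also have "\<dots> = real n * c_gam 2" by simp
    finally show ?thesis unfolding aseq_def th_def g using that by simp
  qed
  have "(\<lambda>n. c_gam 2 * (1 / ln (real n))) \<longlonglongrightarrow> c_gam 2 * 0"
    by (intro tendsto_intros inv_ln_tendsto)
  moreover have "eventually (\<lambda>n. c_gam 2 * (1 / ln (real n)) = aseq \<gamma> n) sequentially"
    by (rule eventually_sequentiallyI[of 1]) (simp add: e)
  ultimately show ?thesis by (simp add: tendsto_cong)
qed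

lemma cube_tele:
  fixes x :: real assumes "x \<ge> 1"
  shows "1 / (x + 1) ^ 3 \<le> 1 / (2 * x^2) - 1 / (2 * (x + 1)^2)"
proof -
  have p: "x > 0" using assms by simp
  define y where "y = x + 1"
  have y: "y > 0" "y \<noteq> 0" "x \<noteq> 0" using p unfolding y_def by auto
  have e1: "1 / (2 * x^2) - 1 / (2 * y^2) = (y^2 - x^2) / (2 * x^2 * y^2)"
    using y by (simp add: diff_frac_eq) (simp add: divide_simps algebra_simps)
  have e2: "y^2 - x^2 = 2*x + 1" unfolding y_def by (simp add: power2_eq_square algebra_simps)
  have "1 / y^3 \<le> (2*x+1) / (2 * x^2 * y^2)"
  proof -
    have "2 * x^2 * y^2 \<le> (2*x+1) * y^3"
    proof -
      have "2 * x^2 \<le> (2*x+1) * y" unfolding y_def using p by (simp add: power2_eq_square algebra_simps)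
      then have "2 * x^2 * y^2 \<le> (2*x+1) * y * y^2" using y by (intro mult_right_mono) auto
      then show ?thesis by (simp add: power2_eq_square power3_eq_cube algebra_simps)
    qed
    then show ?thesis using y p by (simp add: divide_simps)
  qed
  then show ?thesis using e1 e2 unfolding y_def by simp
qed

lemma cube_tail_fin:
  assumes "n \<ge> 1" "N \<ge> n"
  shows "(\<Sum>k\<in>{n<..N}. 1 / real k ^ 3) \<le> 1 / (2 * real n ^ 2) - 1 / (2 * real N ^ 2)"
  using assms(2)
proof (induction N rule: dec_induct)
  case base then show ?case by simp
next
  case (step N)
  have N1: "real N \<ge> 1" using step assms by simp
  have "{n<..Suc N} = insert (Suc N) {n<..N}" using step by auto
  then have "(\<Sum>k\<in>{n<..Suc N}. 1 / real k ^ 3) = 1 / real (Suc N) ^ 3 + (\<Sum>k\<in>{n<..N}. 1 / real k ^ 3)"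
    by simp
  also have "\<dots> \<le> (1 / (2 * real N ^ 2) - 1 / (2 * real (Suc N) ^ 2)) + (1 / (2 * real n ^ 2) - 1 / (2 * real N ^ 2))"
    using cube_tele[OF N1] step.IH by (intro add_mono) (auto simp: add.commute)
  finally show ?case by simp
qed

lemma cube_tail:
  assumes "n \<ge> 1"
  shows "(\<lambda>k. 1 / real k ^ 3) summable_on {n<..}" "infsum (\<lambda>k. 1 / real k ^ 3) {n<..} \<le> 1 / (2 * real n ^ 2)"
proof -
  have bd: "sum (\<lambda>k. 1 / real k ^ 3) F \<le> 1 / (2 * real n ^ 2)" if F: "finite F" "F \<subseteq> {n<..}" for F
  proof (cases "F = {}")
    case True then show ?thesis by simp
  next
    case False
    define N where "N = Max F"
    have NF: "N \<in> F" "\<And>k. k \<in> F \<Longrightarrow> k \<le> N" using F False unfolding N_def by auto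
    have Nn: "N \<ge> n" using NF F by auto
    have "sum (\<lambda>k. 1 / real k ^ 3) F \<le> (\<Sum>k\<in>{n<..N}. 1 / real k ^ 3)"
      by (rule sum_mono2) (use F NF in auto)
    also have "\<dots> \<le> 1 / (2 * real n ^ 2) - 1 / (2 * real N ^ 2)" by (rule cube_tail_fin[OF assms Nn])
    also have "\<dots> \<le> 1 / (2 * real n ^ 2)" by simp
    finally show ?thesis .
  qed
  show "(\<lambda>k. 1 / real k ^ 3) summable_on {n<..}" by (rule infsum_le_bound(1)[OF _ bd]) auto
  show "infsum (\<lambda>k. 1 / real k ^ 3) {n<..} \<le> 1 / (2 * real n ^ 2)" by (rule infsum_le_bound(2)[OF _ bd]) auto
qed

lemma F2:
  assumes "\<gamma> \<ge> 2"
  shows "bseq \<gamma> \<longlonglongrightarrow> 0"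
proof -
  have g0: "\<gamma> > 0" using assms by simp
  have b0: "bseq \<gamma> n \<ge> 0" for n
    unfolding bseq_def using th_nonneg[of \<gamma> n] pker_nonneg[OF g0]
    by (intro mult_nonneg_nonneg infsum_nonneg) auto
  show ?thesis
  proof (cases "\<gamma> > 2")
    case True
    have "bseq \<gamma> n \<le> dseq \<gamma> n" for n
    proof -
      have "bseq \<gamma> n = infsum (\<lambda>k. real n ^ 2 * pker \<gamma> (int k)) {n<..}"
        unfolding bseq_def th_def using True by (simp add: infsum_cmult_right')
      also have "\<dots> \<le> dseq \<gamma> n" unfolding dseq_def
      proof (rule infsum_mono)
        show "(\<lambda>k. real n ^ 2 * pker \<gamma> (int k)) summable_on {n<..}"
          by (intro summable_on_cmult_right pker_summable_nat g0)
        show "(\<lambda>k. real k ^ 2 * pker \<gamma> (int k)) summable_on {n<..}"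
          by (rule pker_mom_summable_nat) (use True in auto)
        fix k assume "k \<in> {n<..}"
        then show "real n ^ 2 * pker \<gamma> (int k) \<le> real k ^ 2 * pker \<gamma> (int k)"
          using pker_nonneg[OF g0] by (intro mult_right_mono power_mono) auto
      qed
      finally show ?thesis .
    qed
    note le = this
    show ?thesis
    proof (rule tendsto_sandwich[of "\<lambda>_. 0" "bseq \<gamma>" sequentially "dseq \<gamma>" 0])
      show "\<forall>\<^sub>F n in sequentially. 0 \<le> bseq \<gamma> n" by (rule always_eventually) (use b0 in blast)
      show "\<forall>\<^sub>F n in sequentially. bseq \<gamma> n \<le> dseq \<gamma> n" by (rule always_eventually) (use le in blast)
    qed (use F4[OF True] in simp_all)
  next
    case False
    then have g: "\<gamma> = 2" using assms by simp
    have le: "bseq \<gamma> n \<le> c_gam 2 / 2 * (1 / ln (real n))" if n: "n \<ge> 1" for n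
    proof -
      have "infsum (\<lambda>k. pker \<gamma> (int k)) {n<..} = infsum (\<lambda>k. c_gam 2 * (1 / real k ^ 3)) {n<..}"
        unfolding g by (rule infsum_cong) (use n in \<open>auto simp: pker2\<close>)
      also have "\<dots> = c_gam 2 * infsum (\<lambda>k. 1 / real k ^ 3) {n<..}" by (rule infsum_cmult_right')
      also have "\<dots> \<le> c_gam 2 * (1 / (2 * real n ^ 2))"
        using cube_tail(2)[OF n] c_gam_pos[of 2] by (intro mult_left_mono) auto
      finally have "real n ^ 2 * infsum (\<lambda>k. pker \<gamma> (int k)) {n<..} \<le> real n ^ 2 * (c_gam 2 * (1 / (2 * real n ^ 2)))"
        by (intro mult_left_mono) auto
      also have "\<dots> = c_gam 2 / 2" using n by simp
      finally have "th \<gamma> n * (real n ^ 2 * infsum (\<lambda>k. pker \<gamma> (int k)) {n<..}) \<le> th \<gamma> n * (c_gam 2 / 2)"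
        using th_nonneg by (intro mult_left_mono) auto
      then show ?thesis unfolding bseq_def th_def g by (simp add: mult.assoc mult.commute)
    qed
    have "(\<lambda>n. c_gam 2 / 2 * (1 / ln (real n))) \<longlonglongrightarrow> c_gam 2 / 2 * 0"
      by (intro tendsto_intros inv_ln_tendsto)
    note lim = this
    show ?thesis
    proof (rule tendsto_sandwich[of "\<lambda>_. 0" "bseq \<gamma>" sequentially "\<lambda>n. c_gam 2 / 2 * (1 / ln (real n))" 0])
      show "\<forall>\<^sub>F n in sequentially. 0 \<le> bseq \<gamma> n" by (rule always_eventually) (use b0 in blast)
      show "\<forall>\<^sub>F n in sequentially. bseq \<gamma> n \<le> c_gam 2 / 2 * (1 / ln (real n))"
        by (rule eventually_sequentiallyI[of 1]) (use le in blast)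
    qed (use lim in simp_all)
  qed
qed

definition nice :: "(real \<Rightarrow> real) \<Rightarrow> (real \<Rightarrow> real) \<Rightarrow> (real \<Rightarrow> real) \<Rightarrow> (real \<Rightarrow> real) \<Rightarrow> real \<Rightarrow> bool" where
  "nice H D1 D2 D3 M \<longleftrightarrow> M \<ge> 0 \<and>
     (\<forall>v. (H has_real_derivative D1 v) (at v)) \<and>
     (\<forall>v. (D1 has_real_derivative D2 v) (at v)) \<and>
     (\<forall>v. (D2 has_real_derivative D3 v) (at v)) \<and>
     (\<forall>v. \<bar>H v\<bar> \<le> M / (1 + v^2) \<and> \<bar>D2 v\<bar> \<le> M / (1 + v^2) \<and> \<bar>D3 v\<bar> \<le> M / (1 + v^2))"

lemma decay_le: "M \<ge> 0 \<Longrightarrow> M / (1 + v^2) \<le> (M::real)"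
proof -
  assume M: "M \<ge> 0"
  have "M / (1 + v^2) \<le> M / 1"
    by (rule divide_left_mono) (use M in \<open>auto simp: add_pos_nonneg\<close>)
  then show ?thesis by simp
qed

lemma nice_H: "nice H D1 D2 D3 M \<Longrightarrow> \<bar>H v\<bar> \<le> M / (1 + v^2)" unfolding nice_def by blast
lemma nice_D2: "nice H D1 D2 D3 M \<Longrightarrow> \<bar>D2 v\<bar> \<le> M / (1 + v^2)" unfolding nice_def by blast
lemma nice_D3: "nice H D1 D2 D3 M \<Longrightarrow> \<bar>D3 v\<bar> \<le> M / (1 + v^2)" unfolding nice_def by blast
lemma nice_M: "nice H D1 D2 D3 M \<Longrightarrow> M \<ge> 0" unfolding nice_def by blast
lemma nice_H': "nice H D1 D2 D3 M \<Longrightarrow> \<bar>H v\<bar> \<le> M"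
  using nice_H decay_le nice_M order_trans by metis
lemma nice_D2': "nice H D1 D2 D3 M \<Longrightarrow> \<bar>D2 v\<bar> \<le> M"
  using nice_D2 decay_le nice_M order_trans by metis
lemma nice_d0: "nice H D1 D2 D3 M \<Longrightarrow> (H has_real_derivative D1 v) (at v)" unfolding nice_def by blast
lemma nice_d1: "nice H D1 D2 D3 M \<Longrightarrow> (D1 has_real_derivative D2 v) (at v)" unfolding nice_def by blast
lemma nice_d2: "nice H D1 D2 D3 M \<Longrightarrow> (D2 has_real_derivative D3 v) (at v)" unfolding nice_def by blast

lemma decay_shift:
  fixes t u M :: real
  assumes "\<bar>t - u\<bar> \<le> 1" "M \<ge> 0"
  shows "M / (1 + t^2) \<le> 3 * M / (1 + u^2)"
proof -
  have q1: "u^2 \<le> 2 * t^2 + 2 * (u - t)^2"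
    using zero_le_power2[of "t - (u - t)"] by (simp add: power2_eq_square algebra_simps)
  have q2: "(u - t)^2 \<le> 1"
  proof -
    have a: "\<bar>u - t\<bar> \<le> 1" using assms(1) by (simp add: abs_minus_commute)
    have "\<bar>u - t\<bar>^2 \<le> 1" by (rule power_le_one) (use a in auto)
    then show ?thesis by simp
  qed
  have "1 + u^2 \<le> 3 * (1 + t^2)"
  proof -
    define A where "A = u^2"
    define B where "B = t^2"
    define C where "C = (u - t)^2"
    have "A \<le> 2 * B + 2 * C" "C \<le> 1" "0 \<le> B" using q1 q2 unfolding A_def B_def C_def by auto
    then have "1 + A \<le> 3 + 3 * B" by linarith
    then show ?thesis unfolding A_def B_def by (simp add: algebra_simps)
  qed
  then have "M * (1 + u^2) \<le> M * (3 * (1 + t^2))" using assms(2) by (rule mult_left_mono)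
  then show ?thesis by (simp add: divide_simps add_pos_nonneg) (simp add: algebra_simps)
qed

lemma schwartz_decay:
  assumes "schwartz f"
  shows "\<exists>C. \<forall>x. \<bar>(deriv ^^ k) f x\<bar> \<le> C / (1 + x^2)"
proof -
  obtain C0 where C0: "\<And>x. \<bar>x\<bar> ^ 0 * \<bar>(deriv ^^ k) f x\<bar> \<le> C0"
    using assms unfolding schwartz_def by blast
  obtain C2 where C2: "\<And>x. \<bar>x\<bar> ^ 2 * \<bar>(deriv ^^ k) f x\<bar> \<le> C2"
    using assms unfolding schwartz_def by blast
  show ?thesis
  proof (intro exI allI)
    fix x
    have "(1 + x^2) * \<bar>(deriv ^^ k) f x\<bar> \<le> C0 + C2"
      using C0[of x] C2[of x] by (simp add: algebra_simps)
    then show "\<bar>(deriv ^^ k) f x\<bar> \<le> (C0 + C2) / (1 + x^2)"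
      by (simp add: divide_simps add_pos_nonneg mult.commute)
  qed
qed

lemma schwartz_nice:
  assumes "schwartz f"
  shows "\<exists>M. nice f (deriv f) (deriv (deriv f)) (deriv (deriv (deriv f))) M"
proof -
  have dif: "\<And>k x. ((deriv ^^ k) f) differentiable (at x)" using assms unfolding schwartz_def by blast
  have e1: "(deriv ^^ 1) f = deriv f" by simp
  have e2: "(deriv ^^ 2) f = deriv (deriv f)" by (simp add: numeral_2_eq_2)
  have e3: "(deriv ^^ 3) f = deriv (deriv (deriv f))" by (simp add: numeral_3_eq_3)
  obtain A where A: "\<And>x. \<bar>(deriv ^^ 0) f x\<bar> \<le> A / (1 + x^2)" using schwartz_decay[OF assms] by blast
  obtain B where B: "\<And>x. \<bar>(deriv ^^ 2) f x\<bar> \<le> B / (1 + x^2)" using schwartz_decay[OF assms] by blast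
  obtain C where C: "\<And>x. \<bar>(deriv ^^ 3) f x\<bar> \<le> C / (1 + x^2)" using schwartz_decay[OF assms] by blast
  define M where "M = max (max A B) (max C 0)"
  have le: "\<And>Z x. Z \<le> M \<Longrightarrow> Z / (1 + x^2) \<le> M / (1 + x^2)"
    by (simp add: divide_right_mono add_pos_nonneg)
  have d0: "(f has_real_derivative deriv f v) (at v)" for v
    using dif[of 0 v] by (simp add: DERIV_deriv_iff_real_differentiable)
  have d1: "(deriv f has_real_derivative deriv (deriv f) v) (at v)" for v
    using dif[of 1 v] by (simp add: DERIV_deriv_iff_real_differentiable)
  have d2: "(deriv (deriv f) has_real_derivative deriv (deriv (deriv f)) v) (at v)" for v
    using dif[of 2 v] unfolding e2 by (simp add: DERIV_deriv_iff_real_differentiable)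
  show ?thesis
    unfolding nice_def
  proof (intro exI[of _ M] conjI allI)
    show "M \<ge> 0" unfolding M_def by simp
    fix v
    show "(f has_real_derivative deriv f v) (at v)" by (rule d0)
    show "(deriv f has_real_derivative deriv (deriv f) v) (at v)" by (rule d1)
    show "(deriv (deriv f) has_real_derivative deriv (deriv (deriv f)) v) (at v)" by (rule d2)
    have AM: "A \<le> M" "B \<le> M" "C \<le> M" unfolding M_def by auto
    show "\<bar>f v\<bar> \<le> M / (1 + v^2)" using order_trans[OF A[of v] le[OF AM(1)]] by simp
    show "\<bar>deriv (deriv f) v\<bar> \<le> M / (1 + v^2)" using order_trans[OF B[of v] le[OF AM(2)]] unfolding e2 by simp
    show "\<bar>deriv (deriv (deriv f)) v\<bar> \<le> M / (1 + v^2)" using order_trans[OF C[of v] le[OF AM(3)]] unfolding e3 by simp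
  qed
qed

lemma nice_mirror:
  assumes "nice H D1 D2 D3 M"
  shows "nice (\<lambda>v. H (- v)) (\<lambda>v. - D1 (- v)) (\<lambda>v. D2 (- v)) (\<lambda>v. - D3 (- v)) M"
  unfolding nice_def
proof (intro conjI allI)
  show "M \<ge> 0" using nice_M[OF assms] .
  fix v :: real
  have m: "((\<lambda>x::real. - x) has_real_derivative -1) (at v)"
    by (auto intro!: derivative_eq_intros)
  show "((\<lambda>v. H (- v)) has_real_derivative - D1 (- v)) (at v)"
    using DERIV_chain2[OF nice_d0[OF assms, of "- v"] m] by simp
  show "((\<lambda>v. - D1 (- v)) has_real_derivative D2 (- v)) (at v)"
    using DERIV_minus[OF DERIV_chain2[OF nice_d1[OF assms, of "- v"] m]] by simp
  show "((\<lambda>v. D2 (- v)) has_real_derivative - D3 (- v)) (at v)"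
    using DERIV_chain2[OF nice_d2[OF assms, of "- v"] m] by simp
  show "\<bar>H (- v)\<bar> \<le> M / (1 + v^2)" using nice_H[OF assms, of "-v"] by simp
  show "\<bar>D2 (- v)\<bar> \<le> M / (1 + v^2)" using nice_D2[OF assms, of "-v"] by simp
  show "\<bar>- D3 (- v)\<bar> \<le> M / (1 + v^2)" using nice_D3[OF assms, of "-v"] by simp
qed

lemma TA:
  assumes N: "nice H D1 D2 D3 M" and h: "0 \<le> h" "h \<le> 1"
  shows "\<bar>H (u + h) + H (u - h) - 2 * H u - h^2 * D2 u\<bar> \<le> h^3 * (M / (1 + u^2))"
proof (cases "h = 0")
  case True then show ?thesis by simp
next
  case False
  then have hp: "h > 0" using h by simp
  define diff where "diff = (\<lambda>m::nat. if m = 0 then H else if m = 1 then D1 else if m = 2 then D2 else D3)"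
  have D: "\<forall>m t. m < 3 \<and> u - h \<le> t \<and> t \<le> u + h \<longrightarrow> DERIV (diff m) t :> diff (Suc m) t"
  proof (intro allI impI)
    fix m :: nat and t assume "m < 3 \<and> u - h \<le> t \<and> t \<le> u + h"
    then have "m = 0 \<or> m = 1 \<or> m = (2::nat)" by auto
    then show "DERIV (diff m) t :> diff (Suc m) t"
      unfolding diff_def using nice_d0[OF N] nice_d1[OF N] nice_d2[OF N] by auto
  qed
  have d0: "diff 0 = H" unfolding diff_def by simp
  have sum3: "(\<Sum>m<3. diff m u / fact m * y ^ m) = H u + D1 u * y + D2 u / 2 * y^2" for y
    by (simp add: numeral_3_eq_3 diff_def power2_eq_square)
  obtain t1 where t1: "u < t1" "t1 < u + h"
    "H (u + h) = (\<Sum>m<3. diff m u / fact m * (u + h - u) ^ m) + diff 3 t1 / fact 3 * (u + h - u) ^ 3"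
  proof -
    have "\<exists>t. u < t \<and> t < u + h \<and> H (u + h) = (\<Sum>m<3. diff m u / fact m * (u + h - u) ^ m) + diff 3 t / fact 3 * (u + h - u) ^ 3"
      by (rule Taylor_up[OF _ d0 D]) (use hp in simp_all)
    then show ?thesis using that by blast
  qed
  obtain t2 where t2: "u - h < t2" "t2 < u"
    "H (u - h) = (\<Sum>m<3. diff m u / fact m * (u - h - u) ^ m) + diff 3 t2 / fact 3 * (u - h - u) ^ 3"
  proof -
    have "\<exists>t. u - h < t \<and> t < u \<and> H (u - h) = (\<Sum>m<3. diff m u / fact m * (u - h - u) ^ m) + diff 3 t / fact 3 * (u - h - u) ^ 3"
      by (rule Taylor_down[OF _ d0 D]) (use hp in simp_all)
    then show ?thesis using that by blast
  qed
  have f3: "fact 3 = (6::real)" by (simp add: numeral_3_eq_3)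
  have e: "H (u + h) + H (u - h) - 2 * H u - h^2 * D2 u = (D3 t1 - D3 t2) * h^3 / 6"
    using t1(3) t2(3) unfolding sum3 f3 by (simp add: diff_def power2_eq_square power3_eq_cube algebra_simps)
  have b1: "\<bar>D3 t1\<bar> \<le> 3 * M / (1 + u^2)"
    using nice_D3[OF N, of t1] decay_shift[of t1 u M] t1 h nice_M[OF N] by auto
  have b2: "\<bar>D3 t2\<bar> \<le> 3 * M / (1 + u^2)"
    using nice_D3[OF N, of t2] decay_shift[of t2 u M] t2 h nice_M[OF N] by auto
  have "\<bar>D3 t1 - D3 t2\<bar> \<le> 6 * M / (1 + u^2)" using b1 b2 by simp
  then have le: "\<bar>D3 t1 - D3 t2\<bar> * h^3 / 6 \<le> (6 * M / (1 + u^2)) * h^3 / 6"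
    using hp by (intro divide_right_mono mult_right_mono) auto
  have "\<bar>(D3 t1 - D3 t2) * h^3 / 6\<bar> = \<bar>D3 t1 - D3 t2\<bar> * h^3 / 6" using hp by (simp add: abs_mult)
  also have "\<dots> \<le> (6 * M / (1 + u^2)) * h^3 / 6" by (rule le)
  also have "\<dots> = h^3 * (M / (1 + u^2))"
    using add_pos_nonneg[OF zero_less_one zero_le_power2[of u]] by (simp add: field_simps)
  finally show ?thesis unfolding e .
qed

lemma TB:
  assumes N: "nice H D1 D2 D3 M" and hu: "0 \<le> u" "u \<le> h"
  shows "\<bar>H (u + h) - H u - D1 0 * h\<bar> \<le> 3 / 2 * M * h^2"
proof (cases "h = 0")
  case True then show ?thesis by simp
next
  case False
  then have hp: "h > 0" using hu by simp
  define diff where "diff = (\<lambda>m::nat. if m = 0 then H else if m = 1 then D1 else D2)"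
  have D: "\<forall>m t. m < 2 \<and> u \<le> t \<and> t \<le> u + h \<longrightarrow> DERIV (diff m) t :> diff (Suc m) t"
  proof (intro allI impI)
    fix m :: nat and t assume "m < 2 \<and> u \<le> t \<and> t \<le> u + h"
    then have "m = 0 \<or> m = (1::nat)" by auto
    then show "DERIV (diff m) t :> diff (Suc m) t"
      unfolding diff_def using nice_d0[OF N] nice_d1[OF N] by auto
  qed
  have d0: "diff 0 = H" unfolding diff_def by simp
  obtain t where t: "u < t" "t < u + h"
    "H (u + h) = (\<Sum>m<2. diff m u / fact m * (u + h - u) ^ m) + diff 2 t / fact 2 * (u + h - u) ^ 2"
  proof -
    have "\<exists>t. u < t \<and> t < u + h \<and> H (u + h) = (\<Sum>m<2. diff m u / fact m * (u + h - u) ^ m) + diff 2 t / fact 2 * (u + h - u) ^ 2"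
      by (rule Taylor_up[OF _ d0 D]) (use hp in simp_all)
    then show ?thesis using that by blast
  qed
  have e: "H (u + h) - H u - D1 u * h = D2 t / 2 * h^2"
    using t(3) by (simp add: numeral_2_eq_2 diff_def)
  have b1: "\<bar>H (u + h) - H u - D1 u * h\<bar> \<le> M / 2 * h^2"
    unfolding e using nice_D2'[OF N, of t] by (simp add: abs_mult mult_right_mono)
  have b2: "\<bar>D1 u - D1 0\<bar> \<le> M * h"
  proof (cases "u = 0")
    case True then show ?thesis using nice_M[OF N] hp by simp
  next
    case False
    then have up: "0 < u" using hu by simp
    obtain z where z: "0 < z" "z < u" "D1 u - D1 0 = (u - 0) * D2 z"
      using MVT2[OF up, of D1 D2] nice_d1[OF N] by blast
    have "\<bar>D1 u - D1 0\<bar> = u * \<bar>D2 z\<bar>" using z up by (simp add: abs_mult)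
    also have "\<dots> \<le> h * M" using nice_D2'[OF N, of z] hu up by (intro mult_mono) auto
    finally show ?thesis by (simp add: mult.commute)
  qed
  have sp: "H (u + h) - H u - D1 0 * h = (H (u + h) - H u - D1 u * h) + (D1 u - D1 0) * h"
    by (simp add: algebra_simps)
  have "\<bar>H (u + h) - H u - D1 0 * h\<bar> \<le> \<bar>H (u + h) - H u - D1 u * h\<bar> + \<bar>(D1 u - D1 0) * h\<bar>"
    unfolding sp by (rule abs_triangle_ineq)
  also have "\<bar>(D1 u - D1 0) * h\<bar> = \<bar>D1 u - D1 0\<bar> * h" using hp by (simp add: abs_mult)
  finally have "\<bar>H (u + h) - H u - D1 0 * h\<bar> \<le> \<bar>H (u + h) - H u - D1 u * h\<bar> + \<bar>D1 u - D1 0\<bar> * h" .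
  also have "\<dots> \<le> M / 2 * h^2 + M * h * h"
    using b1 b2 hp by (intro add_mono mult_right_mono) auto
  finally show ?thesis by (simp add: power2_eq_square algebra_simps)
qed

definition Dl :: "(real \<Rightarrow> real) \<Rightarrow> real \<Rightarrow> real \<Rightarrow> real" where
  "Dl H u h = H (u + h) + H (u - h) - 2 * H u"
definition Jf :: "(real \<Rightarrow> real) \<Rightarrow> real \<Rightarrow> real \<Rightarrow> real \<Rightarrow> real" where
  "Jf H D0 u h = H (u + h) - H u - D0 * h"
definition Eb :: "(real \<Rightarrow> real) \<Rightarrow> real \<Rightarrow> real \<Rightarrow> nat \<Rightarrow> int \<Rightarrow> nat \<Rightarrow> real" where
  "Eb H M D0 n x k = (let u = real_of_int x / real n; h = real k / real n in
     if k \<le> n then real k ^ 3 / real n * (M / (1 + u^2)) + (if 0 \<le> x \<and> x \<le> int k then 5/2 * M * real k ^ 2 else 0)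
     else real n ^ 2 * (\<bar>H (u + h)\<bar> + \<bar>H (u - h)\<bar> + 2 * \<bar>H u\<bar>)
          + (if 0 \<le> x \<and> x \<le> int k then real n * real k * \<bar>D0\<bar> else 0))"

lemma Eb_nonneg: "M \<ge> 0 \<Longrightarrow> Eb H M D0 n x k \<ge> 0"
  unfolding Eb_def Let_def by (auto intro!: add_nonneg_nonneg mult_nonneg_nonneg divide_nonneg_nonneg
      simp: add_pos_nonneg)

lemma Eb_le: "nice H D1 D2 D3 M \<Longrightarrow> Eb H M D0 n x k \<le>
   (if k \<le> n then real k ^ 3 / real n * M + 5/2 * M * real k ^ 2 else 4 * M * real n ^ 2 + real n * real k * \<bar>D0\<bar>)"
proof -
  assume N: "nice H D1 D2 D3 M"
  have M0: "M \<ge> 0" by (rule nice_M[OF N])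
  show ?thesis
  proof (cases "k \<le> n")
    case True
    have "real k ^ 3 / real n * (M / (1 + (real_of_int x / real n)^2)) \<le> real k ^ 3 / real n * M"
      by (intro mult_left_mono decay_le M0) auto
    moreover have "(if 0 \<le> x \<and> x \<le> int k then 5/2 * M * real k ^ 2 else 0) \<le> 5/2 * M * real k ^ 2"
      using M0 by auto
    ultimately show ?thesis using True unfolding Eb_def Let_def by simp
  next
    case False
    let ?u = "real_of_int x / real n" and ?h = "real k / real n"
    have "\<bar>H (?u + ?h)\<bar> + \<bar>H (?u - ?h)\<bar> + 2 * \<bar>H ?u\<bar> \<le> 4 * M"
      using nice_H'[OF N, of "?u + ?h"] nice_H'[OF N, of "?u - ?h"] nice_H'[OF N, of "?u"] by linarith
    then have "real n ^ 2 * (\<bar>H (?u + ?h)\<bar> + \<bar>H (?u - ?h)\<bar> + 2 * \<bar>H ?u\<bar>) \<le> real n ^ 2 * (4 * M)"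
      by (intro mult_left_mono) auto
    moreover have "(if 0 \<le> x \<and> x \<le> int k then real n * real k * \<bar>D0\<bar> else 0) \<le> real n * real k * \<bar>D0\<bar>"
      by auto
    ultimately show ?thesis using False unfolding Eb_def Let_def by (simp add: algebra_simps)
  qed
qed

lemma per_r:
  assumes N: "nice H D1 D2 D3 M" and n: "n \<ge> 1" and k: "k \<ge> 1"
    and u: "u = real_of_int x / real n" and h: "h = real k / real n"
    and phi: "\<phi> = Dl H u h \<or> (\<phi> = Jf H (D1 0) u h \<and> 0 \<le> x \<and> x \<le> int k \<and> D0 = D1 0)"
  shows "\<bar>real n ^ 2 * \<phi> - (if k \<le> n then real k ^ 2 * D2 u else 0)\<bar> \<le> Eb H M D0 n x k"
proof -
  have M0: "M \<ge> 0" by (rule nice_M[OF N])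
  have np: "real n > 0" using n by simp
  have h0: "h \<ge> 0" using h by simp
  have nh: "real n * h = real k" using h np by simp
  have nh2: "real n ^ 2 * h ^ 2 = real k ^ 2"
  proof -
    have "real n ^ 2 * h ^ 2 = (real n * h) ^ 2" by (simp only: power_mult_distrib)
    then show ?thesis using nh by simp
  qed
  have nh3: "real n ^ 2 * h ^ 3 = real k ^ 3 / real n"
  proof -
    have "real n ^ 2 * h ^ 3 = (real n * h) ^ 2 * h" by (simp add: power2_eq_square power3_eq_cube algebra_simps)
    also have "\<dots> = real k ^ 2 * (real k / real n)" using nh h by simp
    also have "\<dots> = real k ^ 3 / real n" by (simp add: power2_eq_square power3_eq_cube)
    finally show ?thesis .
  qed
  have Eu: "Eb H M D0 n x k = (if k \<le> n then real k ^ 3 / real n * (M / (1 + u^2)) + (if 0 \<le> x \<and> x \<le> int k then 5/2 * M * real k ^ 2 else 0)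
     else real n ^ 2 * (\<bar>H (u + h)\<bar> + \<bar>H (u - h)\<bar> + 2 * \<bar>H u\<bar>)
          + (if 0 \<le> x \<and> x \<le> int k then real n * real k * \<bar>D0\<bar> else 0))"
    unfolding Eb_def Let_def u h by simp
  show ?thesis
  proof (cases "k \<le> n")
    case kn: True
    have h1: "h \<le> 1" using h kn np by simp
    have extra: "0 \<le> (if 0 \<le> x \<and> x \<le> int k then 5/2 * M * real k ^ 2 else 0)" using M0 by simp
    show ?thesis
    proof (cases "\<phi> = Dl H u h")
      case True
      have "\<bar>Dl H u h - h^2 * D2 u\<bar> \<le> h^3 * (M / (1 + u^2))"
        using TA[OF N h0 h1, of u] unfolding Dl_def .
      then have "real n ^ 2 * \<bar>Dl H u h - h^2 * D2 u\<bar> \<le> real n ^ 2 * (h^3 * (M / (1 + u^2)))"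
        by (intro mult_left_mono) auto
      moreover have "real n ^ 2 * \<bar>Dl H u h - h^2 * D2 u\<bar> = \<bar>real n ^ 2 * Dl H u h - real k ^ 2 * D2 u\<bar>"
      proof -
        have "real n ^ 2 * (Dl H u h - h^2 * D2 u) = real n ^ 2 * Dl H u h - real k ^ 2 * D2 u"
          by (subst nh2[symmetric]) (simp add: algebra_simps)
        moreover have "real n ^ 2 * \<bar>Dl H u h - h^2 * D2 u\<bar> = \<bar>real n ^ 2 * (Dl H u h - h^2 * D2 u)\<bar>"
          by (simp add: abs_mult)
        ultimately show ?thesis by simp
      qed
      moreover have "real n ^ 2 * (h^3 * (M / (1 + u^2))) = real k ^ 3 / real n * (M / (1 + u^2))"
        using nh3 by (simp add: mult.assoc[symmetric])
      ultimately show ?thesis using True kn extra unfolding Eu by simp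
    next
      case False
      then have J: "\<phi> = Jf H (D1 0) u h" and x: "0 \<le> x" "x \<le> int k" and DD: "D0 = D1 0" using phi by auto
      have u0: "0 \<le> u" using u x by simp
      have uh: "u \<le> h" using u h x np by (simp add: divide_right_mono)
      have "\<bar>Jf H (D1 0) u h\<bar> \<le> 3/2 * M * h^2" using TB[OF N u0 uh] unfolding Jf_def .
      then have "real n ^ 2 * \<bar>Jf H (D1 0) u h\<bar> \<le> real n ^ 2 * (3/2 * M * h^2)"
        by (intro mult_left_mono) auto
      also have "\<dots> = 3/2 * M * (real n ^ 2 * h ^ 2)" by (simp add: algebra_simps)
      also have "\<dots> = 3/2 * M * real k ^ 2" using nh2 by simp
      finally have a: "\<bar>real n ^ 2 * Jf H (D1 0) u h\<bar> \<le> 3/2 * M * real k ^ 2"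
        by (simp add: abs_mult)
      have b: "\<bar>real k ^ 2 * D2 u\<bar> \<le> M * real k ^ 2"
        using nice_D2'[OF N, of u] by (simp add: abs_mult mult.commute mult_right_mono)
      have "\<bar>real n ^ 2 * Jf H (D1 0) u h - real k ^ 2 * D2 u\<bar> \<le> \<bar>real n ^ 2 * Jf H (D1 0) u h\<bar> + \<bar>real k ^ 2 * D2 u\<bar>"
        by (rule abs_triangle_ineq4)
      also have "\<dots> \<le> 5/2 * M * real k ^ 2" using a b by simp
      finally have c: "\<bar>real n ^ 2 * Jf H (D1 0) u h - real k ^ 2 * D2 u\<bar> \<le> 5/2 * M * real k ^ 2" .
      have d: "0 \<le> real k ^ 3 / real n * (M / (1 + u^2))"
        using M0 by (intro mult_nonneg_nonneg divide_nonneg_nonneg) auto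
      have e: "Eb H M D0 n x k = real k ^ 3 / real n * (M / (1 + u^2)) + 5/2 * M * real k ^ 2"
        unfolding Eu using kn x by simp
      have f: "(if k \<le> n then real k ^ 2 * D2 u else 0) = real k ^ 2 * D2 u" using kn by simp
      show ?thesis unfolding e f J using c d by linarith
    qed
  next
    case kn: False
    have base: "real n ^ 2 * (\<bar>H (u + h)\<bar> + \<bar>H (u - h)\<bar> + 2 * \<bar>H u\<bar>) \<ge> 0" by simp
    show ?thesis
    proof (cases "\<phi> = Dl H u h")
      case True
      have "\<bar>Dl H u h\<bar> \<le> \<bar>H (u + h)\<bar> + \<bar>H (u - h)\<bar> + 2 * \<bar>H u\<bar>"
        unfolding Dl_def by linarith
      then have "\<bar>real n ^ 2 * Dl H u h\<bar> \<le> real n ^ 2 * (\<bar>H (u + h)\<bar> + \<bar>H (u - h)\<bar> + 2 * \<bar>H u\<bar>)"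
        by (simp add: abs_mult mult_left_mono)
      moreover have "0 \<le> (if 0 \<le> x \<and> x \<le> int k then real n * real k * \<bar>D0\<bar> else 0)" by simp
      ultimately show ?thesis using True kn unfolding Eu by (simp only: if_False) linarith
    next
      case False
      then have J: "\<phi> = Jf H (D1 0) u h" and x: "0 \<le> x" "x \<le> int k" and DD: "D0 = D1 0" using phi by auto
      have "\<bar>Jf H (D1 0) u h\<bar> \<le> \<bar>H (u + h)\<bar> + \<bar>H (u - h)\<bar> + 2 * \<bar>H u\<bar> + \<bar>D1 0\<bar> * h"
      proof -
        have "\<bar>D1 0 * h\<bar> = \<bar>D1 0\<bar> * h" using h0 by (simp add: abs_mult)
        moreover have "\<bar>H (u + h) - H u - D1 0 * h\<bar> \<le> \<bar>H (u + h)\<bar> + \<bar>H u\<bar> + \<bar>D1 0 * h\<bar>"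
          by (simp add: abs_le_iff)
            (use abs_ge_self[of "H (u+h)"] abs_ge_minus_self[of "H (u+h)"] abs_ge_self[of "H u"]
               abs_ge_minus_self[of "H u"] abs_ge_self[of "D1 0 * h"] abs_ge_minus_self[of "D1 0 * h"] in linarith)
        moreover have "0 \<le> \<bar>H (u - h)\<bar> + \<bar>H u\<bar>" by simp
        ultimately show ?thesis unfolding Jf_def by linarith
      qed
      then have "\<bar>real n ^ 2 * Jf H (D1 0) u h\<bar> \<le> real n ^ 2 * (\<bar>H (u + h)\<bar> + \<bar>H (u - h)\<bar> + 2 * \<bar>H u\<bar> + \<bar>D1 0\<bar> * h)"
        by (simp add: abs_mult mult_left_mono)
      also have "\<dots> = real n ^ 2 * (\<bar>H (u + h)\<bar> + \<bar>H (u - h)\<bar> + 2 * \<bar>H u\<bar>) + real n * real k * \<bar>D1 0\<bar>"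
        using nh by (simp add: algebra_simps power2_eq_square)
      finally show ?thesis using J kn x DD unfolding Eu by simp
    qed
  qed
qed

lemma infsum_diff':
  fixes f g :: "'a \<Rightarrow> real"
  assumes "f summable_on A" "g summable_on A"
  shows "infsum (\<lambda>x. f x - g x) A = infsum f A - infsum g A"
proof -
  have "infsum (\<lambda>x. f x + - g x) A = infsum f A + infsum (\<lambda>x. - g x) A"
    by (rule infsum_add) (use assms in \<open>auto simp: summable_on_uminus\<close>)
  then show ?thesis by (simp add: infsum_uminus)
qed

lemma summable_on_diff':
  fixes f g :: "'a \<Rightarrow> real"
  assumes "f summable_on A" "g summable_on A"
  shows "(\<lambda>x. f x - g x) summable_on A"
proof -
  have "(\<lambda>x. f x + - g x) summable_on A"
    by (rule summable_on_add) (use assms in \<open>auto simp: summable_on_uminus\<close>)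
  then show ?thesis by simp
qed

lemma split_n:
  fixes f :: "nat \<Rightarrow> real"
  assumes "f summable_on {1..}"
  shows "infsum f {1..} = sum f {1..n} + infsum f {n<..}"
proof -
  have U: "{1::nat..} = {1..n} \<union> {n<..}" by auto
  have "infsum f {1..} = infsum f {1..n} + infsum f {n<..}"
    unfolding U by (rule infsum_Un_disjoint) (auto intro: summable_on_subset_banach[OF assms])
  then show ?thesis by simp
qed

lemma finite_if_summable:
  fixes A :: "nat \<Rightarrow> real"
  shows "(\<lambda>k. if k \<le> n then A k else 0) summable_on S"
  by (rule finite_nonzero_values_imp_summable_on) (auto intro: finite_subset[of _ "{..n}"])

lemma infsum_if_le:
  fixes A :: "nat \<Rightarrow> real"
  shows "infsum (\<lambda>k. if k \<le> n then A k else 0) {1..} = sum A {1..n}"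
proof -
  have "infsum (\<lambda>k. if k \<le> n then A k else 0) {1..} = infsum (\<lambda>k. if k \<le> n then A k else 0) {1..n}"
    by (rule infsum_cong_neutral) auto
  also have "\<dots> = sum A {1..n}" by simp
  finally show ?thesis .
qed

lemma err_bound:
  fixes \<gamma> :: real and n :: nat and x :: int and \<phi> :: "nat \<Rightarrow> real"
  assumes g: "\<gamma> \<ge> 2" and N: "nice H D1 D2 D3 M" and n: "n \<ge> 1"
    and u: "u = real_of_int x / real n"
    and phi: "\<And>k. k \<ge> 1 \<Longrightarrow> \<phi> k = Dl H u (real k / real n) \<or>
               (\<phi> k = Jf H (D1 0) u (real k / real n) \<and> 0 \<le> x \<and> x \<le> int k \<and> D0 = D1 0)"
    and sK: "(\<lambda>k. pker \<gamma> (int k) * \<phi> k) summable_on {1..}"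
  shows "(\<lambda>k. pker \<gamma> (int k) * Eb H M D0 n x k) summable_on {1..}"
    and "\<bar>Theta \<gamma> n * infsum (\<lambda>k. pker \<gamma> (int k) * \<phi> k) {1..} - kappa \<gamma> * D2 u\<bar>
         \<le> th \<gamma> n * infsum (\<lambda>k. pker \<gamma> (int k) * Eb H M D0 n x k) {1..}
            + \<bar>th \<gamma> n * Sn \<gamma> n - kappa \<gamma>\<bar> * \<bar>D2 u\<bar>"
proof -
  define p where "p = (\<lambda>k::nat. pker \<gamma> (int k))"
  define E where "E = (\<lambda>k. Eb H M D0 n x k)"
  have g0: "\<gamma> > 0" using g by simp
  have p0: "\<And>k. p k \<ge> 0" unfolding p_def using pker_nonneg[OF g0] by simp
  have M0: "M \<ge> 0" by (rule nice_M[OF N])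
  have E0: "\<And>k. E k \<ge> 0" unfolding E_def by (rule Eb_nonneg[OF M0])
  define F where "F = (\<lambda>k. (if k \<le> n then p k * (real k ^ 3 / real n * M + 5/2 * M * real k ^ 2) else 0)
                          + 4 * M * real n ^ 2 * p k + real n * \<bar>D0\<bar> * (real k ^ 1 * p k))"
  have sF: "F summable_on {1..}"
    unfolding F_def
    by (intro summable_on_add finite_if_summable summable_on_cmult_right)
       (unfold p_def, (rule pker_summable_nat[OF g0]), (rule pker_mom_summable_nat), use g in simp)
  have pEF: "p k * E k \<le> F k" for k
  proof -
    have "p k * E k \<le> p k * (if k \<le> n then real k ^ 3 / real n * M + 5/2 * M * real k ^ 2 else 4 * M * real n ^ 2 + real n * real k * \<bar>D0\<bar>)"
      unfolding E_def by (intro mult_left_mono Eb_le[OF N] p0)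
    also have "\<dots> \<le> F k" unfolding F_def using p0[of k] M0
      by (auto simp: algebra_simps intro!: add_nonneg_nonneg mult_nonneg_nonneg)
    finally show ?thesis .
  qed
  show sE: "(\<lambda>k. pker \<gamma> (int k) * Eb H M D0 n x k) summable_on {1..}"
    using summable_on_comparison_test[OF sF, of "\<lambda>k. p k * E k"] pEF p0 E0
    unfolding p_def E_def by auto
  define G where "G = (\<lambda>k. if k \<le> n then p k * (real k ^ 2 * D2 u) else 0)"
  have sG: "G summable_on {1..}" unfolding G_def by (rule finite_if_summable)
  have iG: "infsum G {1..} = D2 u * Sn \<gamma> n"
    unfolding G_def infsum_if_le Sn_def p_def by (simp add: sum_distrib_left algebra_simps)
  define g where "g = (\<lambda>k. real n ^ 2 * (p k * \<phi> k) - G k)"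
  have sK': "(\<lambda>k. real n ^ 2 * (p k * \<phi> k)) summable_on {1..}"
    by (rule summable_on_cmult_right) (use sK in \<open>simp add: p_def\<close>)
  have sg: "g summable_on {1..}" unfolding g_def by (rule summable_on_diff'[OF sK' sG])
  have ig: "infsum g {1..} = real n ^ 2 * infsum (\<lambda>k. p k * \<phi> k) {1..} - D2 u * Sn \<gamma> n"
    unfolding g_def infsum_diff'[OF sK' sG] iG by (simp add: infsum_cmult_right')
  have gk: "\<bar>g k\<bar> \<le> p k * E k" if k: "k \<in> {1..}" for k
  proof -
    have "g k = p k * (real n ^ 2 * \<phi> k - (if k \<le> n then real k ^ 2 * D2 u else 0))"
      unfolding g_def G_def by (simp add: algebra_simps)
    moreover have "\<bar>real n ^ 2 * \<phi> k - (if k \<le> n then real k ^ 2 * D2 u else 0)\<bar> \<le> E k"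
      unfolding E_def by (rule per_r[OF N n _ u refl phi]) (use k in auto)
    ultimately show ?thesis using p0[of k] by (simp add: abs_mult mult_left_mono)
  qed
  have sE': "(\<lambda>k. p k * E k) summable_on {1..}" using sE unfolding p_def E_def .
  have up: "infsum g {1..} \<le> infsum (\<lambda>k. p k * E k) {1..}"
    by (rule infsum_mono[OF sg sE']) (use gk in force)
  have lo: "- infsum g {1..} \<le> infsum (\<lambda>k. p k * E k) {1..}"
  proof -
    have "infsum (\<lambda>k. - g k) {1..} \<le> infsum (\<lambda>k. p k * E k) {1..}"
      by (rule infsum_mono[OF _ sE']) (use gk sg in \<open>auto simp: summable_on_uminus abs_le_iff\<close>)
    then show ?thesis by (simp add: infsum_uminus)
  qed
  have ab: "\<bar>infsum g {1..}\<bar> \<le> infsum (\<lambda>k. p k * E k) {1..}" using up lo by linarith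
  have th0: "th \<gamma> n \<ge> 0" by (rule th_nonneg)
  have "Theta \<gamma> n * infsum (\<lambda>k. p k * \<phi> k) {1..} - kappa \<gamma> * D2 u
        = th \<gamma> n * infsum g {1..} + (th \<gamma> n * Sn \<gamma> n - kappa \<gamma>) * D2 u"
    unfolding ig Theta_eq by (simp add: algebra_simps)
  also have "\<bar>\<dots>\<bar> \<le> th \<gamma> n * \<bar>infsum g {1..}\<bar> + \<bar>th \<gamma> n * Sn \<gamma> n - kappa \<gamma>\<bar> * \<bar>D2 u\<bar>"
    using th0 by (metis abs_mult abs_of_nonneg abs_triangle_ineq)
  also have "\<dots> \<le> th \<gamma> n * infsum (\<lambda>k. p k * E k) {1..} + \<bar>th \<gamma> n * Sn \<gamma> n - kappa \<gamma>\<bar> * \<bar>D2 u\<bar>"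
    using ab th0 by (simp add: mult_left_mono)
  finally show "\<bar>Theta \<gamma> n * infsum (\<lambda>k. pker \<gamma> (int k) * \<phi> k) {1..} - kappa \<gamma> * D2 u\<bar>
         \<le> th \<gamma> n * infsum (\<lambda>k. pker \<gamma> (int k) * Eb H M D0 n x k) {1..}
            + \<bar>th \<gamma> n * Sn \<gamma> n - kappa \<gamma>\<bar> * \<bar>D2 u\<bar>" unfolding p_def E_def .
qed

definition W :: "nat \<Rightarrow> int \<Rightarrow> real" where
  "W n x = 1 / (1 + (real_of_int x / real n)^2)"

lemma W_pos: "W n x > 0"
  unfolding W_def by (simp add: add_pos_nonneg)

lemma w_le:
  assumes n: "n \<ge> 1"
  shows "1 / (1 + (real j / real n)^2) \<le> 4 * real n ^ 2 * (1 / (real n + real j) - 1 / (real n + real j + 1))"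
proof -
  define a where "a = real n"
  define b where "b = real j"
  have a1: "a \<ge> 1" using n unfolding a_def by simp
  have b0: "b \<ge> 0" unfolding b_def by simp
  have bb: "b \<le> b^2"
  proof (cases "j = 0")
    case True then show ?thesis unfolding b_def by simp
  next
    case False then have "b \<ge> 1" unfolding b_def by simp
    then show ?thesis by (simp add: power2_eq_square)
  qed
  have aa: "a \<le> a^2" using a1 by (simp add: power2_eq_square)
  have sq: "0 \<le> (a - b)^2" by simp
  have key: "(a + b) * (a + b + 1) \<le> 4 * a^2 + 4 * b^2"
  proof -
    have e1: "(a + b) * (a + b + 1) = a^2 + 2*(a*b) + b^2 + a + b" by (simp add: power2_eq_square algebra_simps)
    have e2: "(a - b)^2 = a^2 - 2*(a*b) + b^2" by (simp add: power2_eq_square algebra_simps)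
    show ?thesis unfolding e1 using e2 sq aa bb zero_le_power2[of a] zero_le_power2[of b] by linarith
  qed
  have pa: "a > 0" using a1 by simp
  have pab: "a + b > 0" "a + b + 1 > 0" using pa b0 by auto
  have l: "1 / (1 + (b / a)^2) = a^2 / (a^2 + b^2)"
    using pa by (simp add: field_simps power2_eq_square)
  have r: "4 * a^2 * (1 / (a + b) - 1 / (a + b + 1)) = 4 * a^2 / ((a + b) * (a + b + 1))"
    using pab by (simp add: field_simps)
  have "a^2 / (a^2 + b^2) \<le> 4 * a^2 / ((a + b) * (a + b + 1))"
  proof -
    have "a^2 * ((a + b) * (a + b + 1)) \<le> (4 * a^2) * (a^2 + b^2)"
      using key mult_left_mono[OF key, of "a^2"] by (simp add: algebra_simps)
    moreover have "a^2 + b^2 > 0" using pa by (simp add: add_pos_nonneg)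
    ultimately show ?thesis using pab by (simp add: divide_simps mult.commute)
  qed
  then show ?thesis using l r unfolding a_def b_def by simp
qed

lemma w_sum:
  assumes n: "n \<ge> 1"
  shows "(\<Sum>j\<le>m. 1 / (1 + (real j / real n)^2)) \<le> 4 * real n ^ 2 * (1 / real n - 1 / (real n + real m + 1))"
proof (induction m)
  case 0 then show ?case using w_le[OF n, of 0] by simp
next
  case (Suc m)
  have "(\<Sum>j\<le>Suc m. 1 / (1 + (real j / real n)^2)) = (\<Sum>j\<le>m. 1 / (1 + (real j / real n)^2)) + 1 / (1 + (real (Suc m) / real n)^2)"
    by simp
  also have "\<dots> \<le> 4 * real n ^ 2 * (1 / real n - 1 / (real n + real m + 1))
      + 4 * real n ^ 2 * (1 / (real n + real (Suc m)) - 1 / (real n + real (Suc m) + 1))"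
    by (intro add_mono Suc.IH w_le[OF n])
  also have "\<dots> = 4 * real n ^ 2 * (1 / real n - 1 / (real n + real (Suc m) + 1))"
    by (simp add: algebra_simps)
  finally show ?case .
qed

lemma w_fin:
  assumes n: "n \<ge> 1" and S: "finite S"
  shows "(\<Sum>j\<in>S. 1 / (1 + (real j / real n)^2)) \<le> 4 * real n"
proof -
  have "(\<Sum>j\<in>S. 1 / (1 + (real j / real n)^2)) \<le> (\<Sum>j\<le>Max (insert 0 S). 1 / (1 + (real j / real n)^2))"
    by (rule sum_mono2) (use S in \<open>auto simp: add_pos_nonneg\<close>)
  also have "\<dots> \<le> 4 * real n ^ 2 * (1 / real n - 1 / (real n + real (Max (insert 0 S)) + 1))"
    by (rule w_sum[OF n])
  also have "\<dots> \<le> 4 * real n ^ 2 * (1 / real n)"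
    by (intro mult_left_mono) auto
  also have "\<dots> = 4 * real n" using n by (simp add: power2_eq_square)
  finally show ?thesis .
qed

lemma riemann:
  assumes n: "n \<ge> 1"
  shows "W n summable_on UNIV" "infsum (W n) UNIV \<le> 8 * real n"
proof -
  define w where "w = (\<lambda>j::nat. 1 / (1 + (real j / real n)^2))"
  have bd: "sum (W n) F \<le> 8 * real n" if F: "finite F" for F
  proof -
    let ?P = "F \<inter> {0..}" and ?Q = "F \<inter> {..<0}"
    have "sum (W n) F = sum (W n) ?P + sum (W n) ?Q"
      by (subst sum.union_disjoint[symmetric]) (use F in \<open>auto intro: sum.cong\<close>)
    also have "sum (W n) ?P = sum w (nat ` ?P)"
    proof -
      have "inj_on nat ?P" by (auto simp: inj_on_def)
      then have "sum w (nat ` ?P) = sum (w \<circ> nat) ?P" by (rule sum.reindex)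
      also have "\<dots> = sum (W n) ?P" by (rule sum.cong) (auto simp: w_def W_def)
      finally show ?thesis by simp
    qed
    also have "sum (W n) ?Q = sum w ((\<lambda>x. nat (- x)) ` ?Q)"
    proof -
      have "inj_on (\<lambda>x. nat (- x)) ?Q" by (auto simp: inj_on_def)
      then have "sum w ((\<lambda>x. nat (- x)) ` ?Q) = sum (w \<circ> (\<lambda>x. nat (- x))) ?Q" by (rule sum.reindex)
      also have "\<dots> = sum (W n) ?Q" by (rule sum.cong) (auto simp: w_def W_def power2_eq_square)
      finally show ?thesis by simp
    qed
    also have "sum w (nat ` ?P) + sum w ((\<lambda>x. nat (- x)) ` ?Q) \<le> 4 * real n + 4 * real n"
      unfolding w_def by (intro add_mono w_fin[OF n]) (use F in auto)
    finally show ?thesis by simp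
  qed
  show "W n summable_on UNIV" by (rule infsum_le_bound(1)[OF _ bd]) (auto intro: less_imp_le W_pos)
  show "infsum (W n) UNIV \<le> 8 * real n" by (rule infsum_le_bound(2)[OF _ bd]) (auto intro: less_imp_le W_pos)
qed

lemma W_shift:
  assumes n: "n \<ge> 1"
  shows "(\<lambda>x. W n (x + s)) summable_on UNIV" "infsum (\<lambda>x. W n (x + s)) UNIV \<le> 8 * real n"
proof -
  have b: "bij_betw (\<lambda>x::int. x + s) UNIV UNIV"
    by (rule bij_betwI[of _ _ _ "\<lambda>x. x - s"]) auto
  show "(\<lambda>x. W n (x + s)) summable_on UNIV"
    using summable_on_reindex_bij_betw[OF b, of "W n"] riemann(1)[OF n] by simp
  show "infsum (\<lambda>x. W n (x + s)) UNIV \<le> 8 * real n"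
    using infsum_reindex_bij_betw[OF b, of "W n"] riemann(2)[OF n] by simp
qed

lemma tonelli:
  fixes f :: "'a \<Rightarrow> 'b \<Rightarrow> real"
  assumes nn: "\<And>a b. a \<in> A \<Longrightarrow> b \<in> B \<Longrightarrow> f a b \<ge> 0"
    and s1: "\<And>a. a \<in> A \<Longrightarrow> f a summable_on B"
    and s2: "(\<lambda>a. infsum (f a) B) summable_on A"
  shows "(\<lambda>b. infsum (\<lambda>a. f a b) A) summable_on B"
    and "infsum (\<lambda>b. infsum (\<lambda>a. f a b) A) B = infsum (\<lambda>a. infsum (f a) B) A"
proof -
  have S: "(\<lambda>(a, b). f a b) summable_on Sigma A (\<lambda>_. B)"
    by (rule summable_on_SigmaI[where g = "\<lambda>a. infsum (f a) B"]) (use s1 s2 nn in auto)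
  then have S': "(\<lambda>(a, b). f a b) summable_on A \<times> B" by simp
  have "(\<lambda>(b, a). f a b) summable_on B \<times> A"
    using S' summable_on_swap[of "\<lambda>(a, b). f a b" A B] by (simp add: case_prod_unfold)
  then show "(\<lambda>b. infsum (\<lambda>a. f a b) A) summable_on B"
    using summable_on_Sigma_banach[of "\<lambda>b a. f a b" B "\<lambda>_. A"] by simp
  show "infsum (\<lambda>b. infsum (\<lambda>a. f a b) A) B = infsum (\<lambda>a. infsum (f a) B) A"
    using infsum_swap_banach[of f A B] S' by simp
qed

lemma ind_sum:
  shows "(\<lambda>x::int. if 0 \<le> x \<and> x \<le> int k then c else 0) summable_on UNIV"
    and "infsum (\<lambda>x::int. if 0 \<le> x \<and> x \<le> int k then c else 0) UNIV = (real k + 1) * c"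
proof -
  have e: "infsum (\<lambda>x::int. if 0 \<le> x \<and> x \<le> int k then c else 0) UNIV
         = infsum (\<lambda>x::int. if 0 \<le> x \<and> x \<le> int k then c else 0) {0..int k}"
    by (rule infsum_cong_neutral) auto
  show "(\<lambda>x::int. if 0 \<le> x \<and> x \<le> int k then c else 0) summable_on UNIV"
    by (rule finite_nonzero_values_imp_summable_on) (auto intro: finite_subset[of _ "{0..int k}"])
  have "infsum (\<lambda>x::int. if 0 \<le> x \<and> x \<le> int k then c else 0) {0..int k} = (\<Sum>x\<in>{0..int k}. c)"
    by (simp add: sum.cong)
  also have "\<dots> = (real k + 1) * c" by simp
  finally show "infsum (\<lambda>x::int. if 0 \<le> x \<and> x \<le> int k then c else 0) UNIV = (real k + 1) * c"
    using e by simp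
qed

lemma decay_W: "M / (1 + (real_of_int x / real n)^2) = M * W n x"
  unfolding W_def by simp

lemma xsum_Eb:
  assumes N: "nice H D1 D2 D3 M" and n: "n \<ge> 1" and k: "k \<ge> 1"
  shows "(\<lambda>x. Eb H M D0 n x k) summable_on UNIV"
    and "infsum (\<lambda>x. Eb H M D0 n x k) UNIV \<le> (if k \<le> n then 13 * M * real k ^ 3 else 32 * M * real n ^ 3 + 2 * real n * real k ^ 2 * \<bar>D0\<bar>)"
proof -
  have M0: "M \<ge> 0" by (rule nice_M[OF N])
  have np: "real n > 0" using n by simp
  have "(\<lambda>x. Eb H M D0 n x k) summable_on UNIV \<and>
        infsum (\<lambda>x. Eb H M D0 n x k) UNIV \<le> (if k \<le> n then 13 * M * real k ^ 3 else 32 * M * real n ^ 3 + 2 * real n * real k ^ 2 * \<bar>D0\<bar>)"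
  proof (cases "k \<le> n")
    case True
    define K3 where "K3 = real k ^ 3 / real n * M"
    define c where "c = 5/2 * M * real k ^ 2"
    have e: "(\<lambda>x. Eb H M D0 n x k) = (\<lambda>x. K3 * W n x + (if 0 \<le> x \<and> x \<le> int k then c else 0))"
      unfolding Eb_def Let_def decay_W K3_def c_def using True by (simp add: mult.assoc)
    have s: "(\<lambda>x. K3 * W n x + (if 0 \<le> x \<and> x \<le> int k then c else 0)) summable_on UNIV"
      by (intro summable_on_add summable_on_cmult_right riemann(1)[OF n] ind_sum(1))
    have "infsum (\<lambda>x. K3 * W n x + (if 0 \<le> x \<and> x \<le> int k then c else 0)) UNIV
        = infsum (\<lambda>x. K3 * W n x) UNIV + infsum (\<lambda>x. if 0 \<le> x \<and> x \<le> int k then c else 0) UNIV"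
      by (rule infsum_add) (intro summable_on_cmult_right riemann(1)[OF n], rule ind_sum(1))
    also have "\<dots> = K3 * infsum (W n) UNIV + (real k + 1) * c"
      by (simp only: infsum_cmult_right' ind_sum(2))
    also have "\<dots> \<le> K3 * (8 * real n) + (real k + 1) * c"
      using riemann(2)[OF n] M0 unfolding K3_def by (intro add_mono mult_left_mono) auto
    also have "\<dots> \<le> 13 * M * real k ^ 3"
    proof -
      have a: "K3 * (8 * real n) = 8 * M * real k ^ 3" using np unfolding K3_def by simp
      have "(real k + 1) * c \<le> (2 * real k) * c" using k M0 unfolding c_def
        by (intro mult_right_mono) auto
      also have "\<dots> = 5 * M * real k ^ 3" unfolding c_def by (simp add: power2_eq_square power3_eq_cube)
      finally show ?thesis using a by simp
    qed
    finally show ?thesis using e s True by simp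
  next
    case False
    define c where "c = real n * real k * \<bar>D0\<bar>"
    define G where "G = (\<lambda>x. real n ^ 2 * M * (W n (x + int k) + W n (x + - int k) + 2 * W n x) + (if 0 \<le> x \<and> x \<le> int k then c else 0))"
    have sW: "(\<lambda>x. W n (x + int k) + W n (x + - int k) + 2 * W n x) summable_on UNIV"
      by (intro summable_on_add summable_on_cmult_right W_shift(1)[OF n] riemann(1)[OF n])
    have sG: "G summable_on UNIV" unfolding G_def
      by (intro summable_on_add summable_on_cmult_right sW ind_sum(1))
    have le: "Eb H M D0 n x k \<le> G x" for x
    proof -
      let ?u = "real_of_int x / real n" and ?h = "real k / real n"
      have a: "?u + ?h = real_of_int (x + int k) / real n" by (simp add: add_divide_distrib)
      have b: "?u - ?h = real_of_int (x + - int k) / real n" by (simp add: diff_divide_distrib)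
      have "\<bar>H (?u + ?h)\<bar> + \<bar>H (?u - ?h)\<bar> + 2 * \<bar>H ?u\<bar> \<le> M * W n (x + int k) + M * W n (x + - int k) + 2 * (M * W n x)"
        using nice_H[OF N, of "?u + ?h"] nice_H[OF N, of "?u - ?h"] nice_H[OF N, of "?u"]
        unfolding a b decay_W by linarith
      then have "real n ^ 2 * (\<bar>H (?u + ?h)\<bar> + \<bar>H (?u - ?h)\<bar> + 2 * \<bar>H ?u\<bar>) \<le> real n ^ 2 * (M * W n (x + int k) + M * W n (x + - int k) + 2 * (M * W n x))"
        by (rule mult_left_mono) simp
      also have "\<dots> = real n ^ 2 * M * (W n (x + int k) + W n (x + - int k) + 2 * W n x)"
        by (simp add: algebra_simps)
      finally have "real n ^ 2 * (\<bar>H (?u + ?h)\<bar> + \<bar>H (?u - ?h)\<bar> + 2 * \<bar>H ?u\<bar>) \<le> real n ^ 2 * M * (W n (x + int k) + W n (x + - int k) + 2 * W n x)" .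
      then show ?thesis unfolding Eb_def Let_def G_def c_def using False by simp
    qed
    have sE: "(\<lambda>x. Eb H M D0 n x k) summable_on UNIV"
      by (rule summable_on_comparison_test[OF sG le]) (rule Eb_nonneg[OF M0])
    have "infsum (\<lambda>x. Eb H M D0 n x k) UNIV \<le> infsum G UNIV"
      by (rule infsum_mono[OF sE sG le])
    also have "infsum G UNIV = real n ^ 2 * M * (infsum (\<lambda>x. W n (x + int k)) UNIV + infsum (\<lambda>x. W n (x + - int k)) UNIV + 2 * infsum (W n) UNIV) + (real k + 1) * c"
      unfolding G_def
      by (subst infsum_add, (intro summable_on_cmult_right sW ind_sum(1))+, subst infsum_cmult_right',
          subst infsum_add, (intro summable_on_add summable_on_cmult_right W_shift(1)[OF n] riemann(1)[OF n])+,
          subst infsum_add, (intro summable_on_add summable_on_cmult_right W_shift(1)[OF n] riemann(1)[OF n])+)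
        (simp add: infsum_cmult_right' ind_sum(2))
    also have "\<dots> \<le> real n ^ 2 * M * (8 * real n + 8 * real n + 2 * (8 * real n)) + (2 * real k) * c"
      using W_shift(2)[OF n, of "int k"] W_shift(2)[OF n, of "- int k"] riemann(2)[OF n] M0 k
      unfolding c_def by (intro add_mono mult_left_mono mult_right_mono) auto
    also have "\<dots> = 32 * M * real n ^ 3 + 2 * real n * real k ^ 2 * \<bar>D0\<bar>"
      unfolding c_def by (simp add: power2_eq_square power3_eq_cube algebra_simps)
    finally show ?thesis using sE False by simp
  qed
  then show "(\<lambda>x. Eb H M D0 n x k) summable_on UNIV"
    and "infsum (\<lambda>x. Eb H M D0 n x k) UNIV \<le> (if k \<le> n then 13 * M * real k ^ 3 else 32 * M * real n ^ 3 + 2 * real n * real k ^ 2 * \<bar>D0\<bar>)"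
    by auto
qed

lemma D0_mom_summable:
  assumes "\<gamma> \<ge> 2" "\<gamma> > 2 \<or> D0 = 0"
  shows "(\<lambda>k::nat. c * \<bar>D0\<bar> * (real k ^ 2 * pker \<gamma> (int k))) summable_on A"
proof (cases "D0 = 0")
  case True then show ?thesis by simp
next
  case False then have "\<gamma> > 2" using assms by simp
  then show ?thesis by (intro summable_on_cmult_right pker_mom_summable_nat) auto
qed

lemma L1_bound:
  assumes g: "\<gamma> \<ge> 2" and N: "nice H D1 D2 D3 M" and n: "n \<ge> 1" and D: "\<gamma> > 2 \<or> D0 = 0"
  shows "(\<lambda>x. th \<gamma> n * infsum (\<lambda>k. pker \<gamma> (int k) * Eb H M D0 n x k) {1..}
              + \<bar>th \<gamma> n * Sn \<gamma> n - kappa \<gamma>\<bar> * \<bar>D2 (real_of_int x / real n)\<bar>) summable_on UNIV"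
    and "infsum (\<lambda>x. th \<gamma> n * infsum (\<lambda>k. pker \<gamma> (int k) * Eb H M D0 n x k) {1..}
              + \<bar>th \<gamma> n * Sn \<gamma> n - kappa \<gamma>\<bar> * \<bar>D2 (real_of_int x / real n)\<bar>) UNIV
         \<le> real n * (13 * M * aseq \<gamma> n + 32 * M * bseq \<gamma> n + 2 * \<bar>D0\<bar> * (th \<gamma> n * dseq \<gamma> n)
                     + 8 * M * \<bar>th \<gamma> n * Sn \<gamma> n - kappa \<gamma>\<bar>)"
proof -
  define p where "p = (\<lambda>k::nat. pker \<gamma> (int k))"
  define f where "f = (\<lambda>k x. p k * Eb H M D0 n x k)"
  define Bk where "Bk = (\<lambda>k. if k \<le> n then 13 * M * real k ^ 3 else 32 * M * real n ^ 3 + 2 * real n * real k ^ 2 * \<bar>D0\<bar>)"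
  have g0: "\<gamma> > 0" using g by simp
  have p0: "\<And>k. p k \<ge> 0" unfolding p_def using pker_nonneg[OF g0] by simp
  have M0: "M \<ge> 0" by (rule nice_M[OF N])
  have np: "real n > 0" using n by simp
  have f0: "\<And>k x. f k x \<ge> 0" unfolding f_def using p0 Eb_nonneg[OF M0] by (simp add: mult_nonneg_nonneg)
  have s1: "f k summable_on UNIV" if "k \<in> {1..}" for k
    unfolding f_def by (rule summable_on_cmult_right, rule xsum_Eb(1)[OF N n]) (use that in auto)
  have i1: "infsum (f k) UNIV \<le> p k * Bk k" if "k \<in> {1..}" for k
  proof -
    have "infsum (f k) UNIV = p k * infsum (\<lambda>x. Eb H M D0 n x k) UNIV"
      unfolding f_def by (rule infsum_cmult_right')
    also have "\<dots> \<le> p k * Bk k" unfolding Bk_def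
      by (rule mult_left_mono[OF xsum_Eb(2)[OF N n] p0]) (use that in auto)
    finally show ?thesis .
  qed
  define Q' where "Q' = (\<lambda>k. (if k \<le> n then p k * (13 * M * real k ^ 3) else 0) + 32 * M * real n ^ 3 * p k
                           + 2 * real n * \<bar>D0\<bar> * (real k ^ 2 * p k))"
  define B where "B = (\<lambda>k. 32 * M * real n ^ 3 * p k + 2 * real n * \<bar>D0\<bar> * (real k ^ 2 * p k))"
  define Q where "Q = (\<lambda>k. if k \<le> n then p k * (13 * M * real k ^ 3) else B k)"
  have B0: "B k \<ge> 0" for k unfolding B_def using p0[of k] M0 by (intro add_nonneg_nonneg mult_nonneg_nonneg) auto
  have sa: "(\<lambda>k. 32 * M * real n ^ 3 * p k) summable_on A" for A
    unfolding p_def by (intro summable_on_cmult_right pker_summable_nat[OF g0])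
  have sb: "(\<lambda>k. 2 * real n * \<bar>D0\<bar> * (real k ^ 2 * p k)) summable_on A" for A
    unfolding p_def by (rule D0_mom_summable[OF g]) (use D in simp)
  have sB: "B summable_on A" for A unfolding B_def by (rule summable_on_add[OF sa sb])
  have sQ': "Q' summable_on {1..}" unfolding Q'_def
    by (rule summable_on_add[OF summable_on_add[OF finite_if_summable sa] sb])
  have Q0: "Q k \<ge> 0" for k unfolding Q_def using p0[of k] M0 B0[of k] by auto
  have QQ': "Q k \<le> Q' k" for k unfolding Q_def Q'_def B_def using p0[of k] M0
    by (auto intro!: add_nonneg_nonneg mult_nonneg_nonneg)
  have sQ: "Q summable_on {1..}" by (rule summable_on_comparison_test[OF sQ' QQ' Q0])
  have pBQ: "p k * Bk k \<le> Q k" for k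
  proof (cases "k \<le> n")
    case True then show ?thesis unfolding Bk_def Q_def by simp
  next
    case False
    have "p k * (32 * M * real n ^ 3 + 2 * real n * real k ^ 2 * \<bar>D0\<bar>) = B k"
      unfolding B_def by (simp add: distrib_left mult.commute mult.left_commute)
    then show ?thesis unfolding Bk_def Q_def using False by simp
  qed
  have s2: "(\<lambda>k. infsum (f k) UNIV) summable_on {1..}"
  proof (rule summable_on_comparison_test[OF sQ])
    fix k :: nat assume "k \<in> {1..}"
    then show "infsum (f k) UNIV \<le> Q k" using order_trans[OF i1 pBQ] by blast
    show "0 \<le> infsum (f k) UNIV" by (rule infsum_nonneg) (rule f0)
  qed
  note T = tonelli[of "{1..}" UNIV f, OF _ s1 s2]
  have sX: "(\<lambda>x. infsum (\<lambda>k. f k x) {1..}) summable_on UNIV" by (rule T(1)) (use f0 in auto)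
  have eX: "infsum (\<lambda>x. infsum (\<lambda>k. f k x) {1..}) UNIV = infsum (\<lambda>k. infsum (f k) UNIV) {1..}"
    by (rule T(2)) (use f0 in auto)
  define P3 where "P3 = (\<Sum>k\<in>{1..n}. p k * real k ^ 3)"
  define T0 where "T0 = infsum p {n<..}"
  define T2 where "T2 = infsum (\<lambda>k. real k ^ 2 * p k) {n<..}"
  have "infsum (\<lambda>k. infsum (f k) UNIV) {1..} \<le> infsum Q {1..}"
    by (rule infsum_mono[OF s2 sQ]) (use order_trans[OF i1 pBQ] in blast)
  also have "infsum Q {1..} = sum Q {1..n} + infsum Q {n<..}" by (rule split_n[OF sQ])
  also have "sum Q {1..n} = 13 * M * P3"
    unfolding Q_def P3_def by (simp add: sum_distrib_left algebra_simps)
  also have "infsum Q {n<..} = infsum B {n<..}"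
    unfolding Q_def by (rule infsum_cong) auto
  also have "\<dots> = 32 * M * real n ^ 3 * T0 + 2 * real n * \<bar>D0\<bar> * T2"
    unfolding B_def T0_def T2_def
    by (subst infsum_add) (unfold p_def, (intro summable_on_cmult_right pker_summable_nat[OF g0]),
        use D0_mom_summable[OF g, of D0 "2 * real n"] D in \<open>simp_all add: infsum_cmult_right' mult.assoc\<close>)
  finally have A: "infsum (\<lambda>k. infsum (f k) UNIV) {1..} \<le> 13 * M * P3 + (32 * M * real n ^ 3 * T0 + 2 * real n * \<bar>D0\<bar> * T2)" .
  have th0: "th \<gamma> n \<ge> 0" by (rule th_nonneg)
  have e1: "th \<gamma> n * P3 = real n * aseq \<gamma> n" unfolding aseq_def P3_def p_def using np by simp
  have e2: "th \<gamma> n * (real n ^ 3 * T0) = real n * bseq \<gamma> n" unfolding bseq_def T0_def p_def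
    by (simp add: power2_eq_square power3_eq_cube algebra_simps)
  have e3: "T2 = dseq \<gamma> n" unfolding T2_def dseq_def p_def ..
  have AA: "th \<gamma> n * infsum (\<lambda>x. infsum (\<lambda>k. f k x) {1..}) UNIV
      \<le> real n * (13 * M * aseq \<gamma> n + 32 * M * bseq \<gamma> n + 2 * \<bar>D0\<bar> * (th \<gamma> n * dseq \<gamma> n))"
  proof -
    have "th \<gamma> n * infsum (\<lambda>x. infsum (\<lambda>k. f k x) {1..}) UNIV \<le> th \<gamma> n * (13 * M * P3 + (32 * M * real n ^ 3 * T0 + 2 * real n * \<bar>D0\<bar> * T2))"
      unfolding eX by (rule mult_left_mono[OF A th0])
    also have "\<dots> = 13 * M * (th \<gamma> n * P3) + 32 * M * (th \<gamma> n * (real n ^ 3 * T0)) + 2 * real n * \<bar>D0\<bar> * (th \<gamma> n * T2)"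
      by (simp add: algebra_simps)
    also have "\<dots> = real n * (13 * M * aseq \<gamma> n + 32 * M * bseq \<gamma> n + 2 * \<bar>D0\<bar> * (th \<gamma> n * dseq \<gamma> n))"
      unfolding e1 e2 e3 by (simp add: algebra_simps)
    finally show ?thesis .
  qed
  define c where "c = \<bar>th \<gamma> n * Sn \<gamma> n - kappa \<gamma>\<bar>"
  have c0: "c \<ge> 0" unfolding c_def by simp
  have d2: "\<bar>D2 (real_of_int x / real n)\<bar> \<le> M * W n x" for x
    using nice_D2[OF N, of "real_of_int x / real n"] unfolding decay_W .
  have sD: "(\<lambda>x. \<bar>D2 (real_of_int x / real n)\<bar>) summable_on UNIV"
    by (rule summable_on_comparison_test[OF summable_on_cmult_right[OF riemann(1)[OF n]] d2]) simp
  have iD: "infsum (\<lambda>x. \<bar>D2 (real_of_int x / real n)\<bar>) UNIV \<le> M * (8 * real n)"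
  proof -
    have "infsum (\<lambda>x. \<bar>D2 (real_of_int x / real n)\<bar>) UNIV \<le> infsum (\<lambda>x. M * W n x) UNIV"
      by (rule infsum_mono[OF sD summable_on_cmult_right[OF riemann(1)[OF n]] d2])
    also have "\<dots> \<le> M * (8 * real n)" unfolding infsum_cmult_right' by (rule mult_left_mono[OF riemann(2)[OF n] M0])
    finally show ?thesis .
  qed
  have fe: "infsum (\<lambda>k. f k x) {1..} = infsum (\<lambda>k. pker \<gamma> (int k) * Eb H M D0 n x k) {1..}" for x
    unfolding f_def p_def ..
  have S1: "(\<lambda>x. th \<gamma> n * infsum (\<lambda>k. f k x) {1..}) summable_on UNIV" by (rule summable_on_cmult_right[OF sX])
  have S2: "(\<lambda>x. c * \<bar>D2 (real_of_int x / real n)\<bar>) summable_on UNIV" by (rule summable_on_cmult_right[OF sD])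
  show "(\<lambda>x. th \<gamma> n * infsum (\<lambda>k. pker \<gamma> (int k) * Eb H M D0 n x k) {1..}
              + \<bar>th \<gamma> n * Sn \<gamma> n - kappa \<gamma>\<bar> * \<bar>D2 (real_of_int x / real n)\<bar>) summable_on UNIV"
    using summable_on_add[OF S1 S2] unfolding fe c_def .
  have "infsum (\<lambda>x. th \<gamma> n * infsum (\<lambda>k. f k x) {1..} + c * \<bar>D2 (real_of_int x / real n)\<bar>) UNIV
      = th \<gamma> n * infsum (\<lambda>x. infsum (\<lambda>k. f k x) {1..}) UNIV + c * infsum (\<lambda>x. \<bar>D2 (real_of_int x / real n)\<bar>) UNIV"
    by (subst infsum_add[OF S1 S2]) (simp add: infsum_cmult_right')
  also have "\<dots> \<le> real n * (13 * M * aseq \<gamma> n + 32 * M * bseq \<gamma> n + 2 * \<bar>D0\<bar> * (th \<gamma> n * dseq \<gamma> n)) + c * (M * (8 * real n))"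
    by (intro add_mono AA mult_left_mono[OF iD c0])
  also have "\<dots> = real n * (13 * M * aseq \<gamma> n + 32 * M * bseq \<gamma> n + 2 * \<bar>D0\<bar> * (th \<gamma> n * dseq \<gamma> n) + 8 * M * c)"
    by (simp add: algebra_simps)
  finally show "infsum (\<lambda>x. th \<gamma> n * infsum (\<lambda>k. pker \<gamma> (int k) * Eb H M D0 n x k) {1..}
              + \<bar>th \<gamma> n * Sn \<gamma> n - kappa \<gamma>\<bar> * \<bar>D2 (real_of_int x / real n)\<bar>) UNIV
         \<le> real n * (13 * M * aseq \<gamma> n + 32 * M * bseq \<gamma> n + 2 * \<bar>D0\<bar> * (th \<gamma> n * dseq \<gamma> n)
                     + 8 * M * \<bar>th \<gamma> n * Sn \<gamma> n - kappa \<gamma>\<bar>)"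
    unfolding fe c_def .
qed

lemma summable_bound:
  fixes f :: "'a \<Rightarrow> real"
  assumes b: "\<And>x. x \<in> A \<Longrightarrow> \<bar>f x\<bar> \<le> g x" and s: "g summable_on A"
  shows "f summable_on A"
proof -
  have "(\<lambda>x. norm (f x)) summable_on A"
    by (rule summable_on_comparison_test[OF s]) (use b in auto)
  then show ?thesis by (rule abs_summable_summable)
qed

lemma halfline_rep:
  fixes f :: "int \<Rightarrow> real" and m :: nat
  assumes s: "f summable_on UNIV" and f0: "f 0 = 0"
  shows "(\<lambda>k::nat. f (int k) + (if k \<le> m then f (- int k) else 0)) summable_on {1..}"
    and "infsum f {- int m..} = infsum (\<lambda>k::nat. f (int k) + (if k \<le> m then f (- int k) else 0)) {1..}"
proof -
  have U: "{- int m..} = int ` {1..} \<union> (\<lambda>k. - int k) ` {0..m}"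
  proof (rule set_eqI, rule iffI)
    fix r assume r: "r \<in> {- int m..}"
    show "r \<in> int ` {1..} \<union> (\<lambda>k. - int k) ` {0..m}"
    proof (cases "r \<ge> 1")
      case True then have "r = int (nat r)" "nat r \<in> {1..}" by auto
      then show ?thesis by blast
    next
      case False then have "r = - int (nat (- r))" "nat (- r) \<in> {0..m}" using r by auto
      then show ?thesis by blast
    qed
  qed auto
  have i1: "inj_on int {1..}" by (auto simp: inj_on_def)
  have i2: "inj_on (\<lambda>k::nat. - int k) {0..m}" by (auto simp: inj_on_def)
  have s1: "f summable_on int ` {1..}" by (rule summable_on_subset_banach[OF s]) auto
  have t1: "(\<lambda>k::nat. f (int k)) summable_on {1..}"
    using s1 summable_on_reindex[OF i1, of f] by (simp add: o_def)
  have t2: "(\<lambda>k::nat. if k \<le> m then f (- int k) else 0) summable_on {1..}" by (rule finite_if_summable)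
  show "(\<lambda>k::nat. f (int k) + (if k \<le> m then f (- int k) else 0)) summable_on {1..}"
    by (rule summable_on_add[OF t1 t2])
  have d: "int ` {1..} \<inter> (\<lambda>k. - int k) ` {0..m} = {}" by auto
  have "infsum f {- int m..} = infsum f (int ` {1..}) + infsum f ((\<lambda>k. - int k) ` {0..m})"
    unfolding U by (rule infsum_Un_disjoint[OF s1 _ d]) simp
  also have "infsum f (int ` {1..}) = infsum (\<lambda>k::nat. f (int k)) {1..}"
    using infsum_reindex[OF i1, of f] by (simp add: o_def)
  also have "infsum f ((\<lambda>k. - int k) ` {0..m}) = (\<Sum>k\<in>{0..m}. f (- int k))"
    by (simp add: sum.reindex[OF i2])
  also have "\<dots> = (\<Sum>k\<in>{1..m}. f (- int k))"
    using f0 by (simp add: sum.atLeast_Suc_atMost)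
  also have "\<dots> = infsum (\<lambda>k::nat. if k \<le> m then f (- int k) else 0) {1..}"
    by (rule infsum_if_le[symmetric])
  also have "infsum (\<lambda>k::nat. f (int k)) {1..} + infsum (\<lambda>k::nat. if k \<le> m then f (- int k) else 0) {1..}
      = infsum (\<lambda>k::nat. f (int k) + (if k \<le> m then f (- int k) else 0)) {1..}"
    by (rule infsum_add[symmetric, OF t1 t2])
  finally show "infsum f {- int m..} = infsum (\<lambda>k::nat. f (int k) + (if k \<le> m then f (- int k) else 0)) {1..}" .
qed

lemma halfK:
  fixes H :: "real \<Rightarrow> real" and x :: int and m n :: nat and D M :: real
  assumes g: "\<gamma> \<ge> 2" and HM: "\<And>v. \<bar>H v\<bar> \<le> M"
  defines "f \<equiv> (\<lambda>r. (H (real_of_int (x + r) / real n) - H (real_of_int x / real n) - D * real_of_int r / real n) * pker \<gamma> r)"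
  shows "(\<lambda>k::nat. pker \<gamma> (int k) * (if k \<le> m then Dl H (real_of_int x / real n) (real k / real n)
                          else Jf H D (real_of_int x / real n) (real k / real n))) summable_on {1..}"
    and "infsum f {- int m..} = infsum (\<lambda>k::nat. pker \<gamma> (int k) * (if k \<le> m then Dl H (real_of_int x / real n) (real k / real n)
                          else Jf H D (real_of_int x / real n) (real k / real n))) {1..}"
proof -
  have g0: "\<gamma> > 0" using g by simp
  have sf: "f summable_on UNIV"
  proof (rule summable_bound)
    show "(\<lambda>r. 2 * M * pker \<gamma> r + \<bar>D\<bar> / real n * (\<bar>real_of_int r\<bar> ^ 1 * pker \<gamma> r)) summable_on UNIV"
      by (intro summable_on_add summable_on_cmult_right pker_summable[OF g0] pker_mom_summable) (use g in simp)
    fix r :: int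
    have p0: "pker \<gamma> r \<ge> 0" by (rule pker_nonneg[OF g0])
    have "\<bar>H (real_of_int (x + r) / real n) - H (real_of_int x / real n) - D * real_of_int r / real n\<bar>
          \<le> 2 * M + \<bar>D\<bar> / real n * \<bar>real_of_int r\<bar>"
    proof -
      have "\<bar>D * real_of_int r / real n\<bar> = \<bar>D\<bar> / real n * \<bar>real_of_int r\<bar>" by (simp add: abs_mult)
      then show ?thesis using HM[of "real_of_int (x + r) / real n"] HM[of "real_of_int x / real n"] by linarith
    qed
    then have "\<bar>f r\<bar> \<le> (2 * M + \<bar>D\<bar> / real n * \<bar>real_of_int r\<bar>) * pker \<gamma> r"
      unfolding f_def using p0 by (simp add: abs_mult mult_right_mono)
    then show "\<bar>f r\<bar> \<le> 2 * M * pker \<gamma> r + \<bar>D\<bar> / real n * (\<bar>real_of_int r\<bar> ^ 1 * pker \<gamma> r)"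
      by (simp add: algebra_simps)
  qed
  have f0: "f 0 = 0" unfolding f_def by simp
  have pt: "f (int k) + (if k \<le> m then f (- int k) else 0) = pker \<gamma> (int k) * (if k \<le> m then Dl H (real_of_int x / real n) (real k / real n)
                          else Jf H D (real_of_int x / real n) (real k / real n))" for k
  proof -
    have a: "real_of_int (x + int k) / real n = real_of_int x / real n + real k / real n" by (simp add: add_divide_distrib)
    have b: "real_of_int (x + - int k) / real n = real_of_int x / real n - real k / real n" by (simp add: diff_divide_distrib)
    show ?thesis unfolding f_def a b Dl_def Jf_def pker_sym by (simp add: algebra_simps)
  qed
  show "(\<lambda>k::nat. pker \<gamma> (int k) * (if k \<le> m then Dl H (real_of_int x / real n) (real k / real n)
                          else Jf H D (real_of_int x / real n) (real k / real n))) summable_on {1..}"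
    using halfline_rep(1)[OF sf f0, of m] unfolding pt .
  show "infsum f {- int m..} = infsum (\<lambda>k::nat. pker \<gamma> (int k) * (if k \<le> m then Dl H (real_of_int x / real n) (real k / real n)
                          else Jf H D (real_of_int x / real n) (real k / real n))) {1..}"
    using halfline_rep(2)[OF sf f0, of m] unfolding pt .
qed

lemma sup_bound:
  assumes g: "\<gamma> \<ge> 2" and N: "nice H D1 D2 D3 M" and n: "n \<ge> 1" and D: "\<gamma> > 2 \<or> D0 = 0"
  shows "th \<gamma> n * infsum (\<lambda>k. pker \<gamma> (int k) * Eb H M D0 n x k) {1..}
         \<le> M * aseq \<gamma> n + 5/2 * M * (th \<gamma> n * Sn \<gamma> n) + 4 * M * bseq \<gamma> n + \<bar>D0\<bar> * dseq \<gamma> n"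
proof -
  define p where "p = (\<lambda>k::nat. pker \<gamma> (int k))"
  have g0: "\<gamma> > 0" using g by simp
  have p0: "\<And>k. p k \<ge> 0" unfolding p_def using pker_nonneg[OF g0] by simp
  have M0: "M \<ge> 0" by (rule nice_M[OF N])
  have np: "real n > 0" using n by simp
  define B where "B = (\<lambda>k. 4 * M * real n ^ 2 * p k + real n * \<bar>D0\<bar> * (real k ^ 1 * p k))"
  define R where "R = (\<lambda>k. if k \<le> n then p k * (real k ^ 3 / real n * M + 5/2 * M * real k ^ 2) else B k)"
  have sB: "B summable_on A" for A
  proof -
    have s0: "(\<lambda>k. 4 * M * real n ^ 2 * p k) summable_on A" unfolding p_def
      by (intro summable_on_cmult_right pker_summable_nat[OF g0])
    have s1: "(\<lambda>k. real n * \<bar>D0\<bar> * (real k ^ 1 * p k)) summable_on A" unfolding p_def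
      by (rule summable_on_cmult_right, rule pker_mom_summable_nat) (use g in simp)
    show ?thesis unfolding B_def by (rule summable_on_add[OF s0 s1])
  qed
  have B0: "B k \<ge> 0" for k unfolding B_def using p0[of k] M0 by (intro add_nonneg_nonneg mult_nonneg_nonneg) auto
  have R0: "R k \<ge> 0" for k unfolding R_def using p0[of k] M0 B0[of k] by auto
  have sR': "(\<lambda>k. (if k \<le> n then p k * (real k ^ 3 / real n * M + 5/2 * M * real k ^ 2) else 0) + B k) summable_on {1..}"
    by (rule summable_on_add[OF finite_if_summable sB])
  have sR: "R summable_on {1..}"
    by (rule summable_on_comparison_test[OF sR']) (use R0 B0 in \<open>auto simp: R_def\<close>)
  have pER: "p k * Eb H M D0 n x k \<le> R k" for k
  proof -
    have "p k * Eb H M D0 n x k \<le> p k * (if k \<le> n then real k ^ 3 / real n * M + 5/2 * M * real k ^ 2 else 4 * M * real n ^ 2 + real n * real k * \<bar>D0\<bar>)"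
      by (intro mult_left_mono Eb_le[OF N] p0)
    also have "\<dots> = R k" unfolding R_def B_def by (simp add: algebra_simps)
    finally show ?thesis .
  qed
  have sE: "(\<lambda>k. p k * Eb H M D0 n x k) summable_on {1..}"
    by (rule summable_on_comparison_test[OF sR pER]) (use p0 Eb_nonneg[OF M0] in simp)
  define P3 where "P3 = (\<Sum>k\<in>{1..n}. p k * real k ^ 3)"
  define T0 where "T0 = infsum p {n<..}"
  define T1 where "T1 = infsum (\<lambda>k. real k ^ 1 * p k) {n<..}"
  have "infsum (\<lambda>k. p k * Eb H M D0 n x k) {1..} \<le> infsum R {1..}"
    by (rule infsum_mono[OF sE sR pER])
  also have "\<dots> = sum R {1..n} + infsum R {n<..}" by (rule split_n[OF sR])
  also have "sum R {1..n} = M / real n * P3 + 5/2 * M * Sn \<gamma> n"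
    unfolding R_def P3_def Sn_def p_def by (simp add: sum.distrib sum_distrib_left algebra_simps)
  also have "infsum R {n<..} = infsum B {n<..}" unfolding R_def by (rule infsum_cong) auto
  also have "\<dots> = 4 * M * real n ^ 2 * T0 + real n * \<bar>D0\<bar> * T1"
  proof -
    have s0: "(\<lambda>k. 4 * M * real n ^ 2 * p k) summable_on {n<..}" unfolding p_def
      by (intro summable_on_cmult_right pker_summable_nat[OF g0])
    have s1: "(\<lambda>k. real n * \<bar>D0\<bar> * (real k ^ 1 * p k)) summable_on {n<..}" unfolding p_def
      by (rule summable_on_cmult_right, rule pker_mom_summable_nat) (use g in simp)
    show ?thesis unfolding B_def T0_def T1_def by (subst infsum_add[OF s0 s1]) (simp only: infsum_cmult_right')
  qed
  finally have A: "infsum (\<lambda>k. p k * Eb H M D0 n x k) {1..} \<le> M / real n * P3 + 5/2 * M * Sn \<gamma> n + (4 * M * real n ^ 2 * T0 + real n * \<bar>D0\<bar> * T1)" .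
  have th0: "th \<gamma> n \<ge> 0" by (rule th_nonneg)
  have e1: "th \<gamma> n * (M / real n * P3) = M * aseq \<gamma> n" unfolding aseq_def P3_def p_def by simp
  have e2: "th \<gamma> n * (4 * M * real n ^ 2 * T0) = 4 * M * bseq \<gamma> n" unfolding bseq_def T0_def p_def by simp
  have e3: "th \<gamma> n * (real n * \<bar>D0\<bar> * T1) \<le> \<bar>D0\<bar> * dseq \<gamma> n"
  proof (cases "D0 = 0")
    case True then show ?thesis by simp
  next
    case False
    then have g2: "\<gamma> > 2" using D by simp
    then have "th \<gamma> n = 1" unfolding th_def by simp
    moreover have "real n * T1 \<le> dseq \<gamma> n"
    proof -
      have "real n * T1 = infsum (\<lambda>k. real n * (real k ^ 1 * p k)) {n<..}"
        unfolding T1_def by (rule infsum_cmult_right'[symmetric])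
      also have "\<dots> \<le> infsum (\<lambda>k. real k ^ 2 * p k) {n<..}"
      proof (rule infsum_mono)
        show "(\<lambda>k. real n * (real k ^ 1 * p k)) summable_on {n<..}" unfolding p_def
          by (rule summable_on_cmult_right, rule pker_mom_summable_nat) (use g in simp)
        show "(\<lambda>k. real k ^ 2 * p k) summable_on {n<..}" unfolding p_def
          by (intro pker_mom_summable_nat) (use g2 in simp)
        fix k assume "k \<in> {n<..}"
        then have "real n \<le> real k" by simp
        then have "real n * real k \<le> real k * real k" by (intro mult_right_mono) auto
        then show "real n * (real k ^ 1 * p k) \<le> real k ^ 2 * p k"
          using p0[of k] by (simp add: power2_eq_square mult.assoc[symmetric] mult_right_mono)
      qed
      finally show ?thesis unfolding dseq_def p_def .
    qed
    ultimately have "th \<gamma> n * (real n * \<bar>D0\<bar> * T1) = \<bar>D0\<bar> * (real n * T1)" by simp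
    also have "\<dots> \<le> \<bar>D0\<bar> * dseq \<gamma> n" by (rule mult_left_mono) (use \<open>real n * T1 \<le> dseq \<gamma> n\<close> in auto)
    finally show ?thesis .
  qed
  have "th \<gamma> n * infsum (\<lambda>k. p k * Eb H M D0 n x k) {1..} \<le> th \<gamma> n * (M / real n * P3 + 5/2 * M * Sn \<gamma> n + (4 * M * real n ^ 2 * T0 + real n * \<bar>D0\<bar> * T1))"
    by (rule mult_left_mono[OF A th0])
  also have "\<dots> = th \<gamma> n * (M / real n * P3) + 5/2 * M * (th \<gamma> n * Sn \<gamma> n) + th \<gamma> n * (4 * M * real n ^ 2 * T0) + th \<gamma> n * (real n * \<bar>D0\<bar> * T1)"
    by (simp add: algebra_simps)
  also have "\<dots> \<le> M * aseq \<gamma> n + 5/2 * M * (th \<gamma> n * Sn \<gamma> n) + 4 * M * bseq \<gamma> n + \<bar>D0\<bar> * dseq \<gamma> n"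
    unfolding e1 e2 using e3 by linarith
  finally show ?thesis unfolding p_def .
qed

lemma glue_same: "glue G G = G"
  unfolding glue_def by (rule ext) simp

lemma repA:
  assumes b: "\<beta> < 1" and g: "\<gamma> \<ge> 2" and GM: "\<And>v. \<bar>G v\<bar> \<le> M"
  shows "(\<lambda>k. pker \<gamma> (int k) * Dl G (real_of_int x / real n) (real k / real n)) summable_on {1..}"
    and "Kop \<beta> \<gamma> G G n x = infsum (\<lambda>k. pker \<gamma> (int k) * Dl G (real_of_int x / real n) (real k / real n)) {1..}"
proof -
  have g0: "\<gamma> > 0" using g by simp
  define f where "f = (\<lambda>r. (G (real_of_int (x + r) / real n) - G (real_of_int x / real n)) * pker \<gamma> r)"
  have sf: "f summable_on UNIV"
  proof (rule summable_bound)
    show "(\<lambda>r. 2 * M * pker \<gamma> r) summable_on UNIV" by (intro summable_on_cmult_right pker_summable[OF g0])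
    fix r :: int
    have "\<bar>G (real_of_int (x + r) / real n) - G (real_of_int x / real n)\<bar> \<le> 2 * M"
      using GM[of "real_of_int (x + r) / real n"] GM[of "real_of_int x / real n"] by linarith
    then show "\<bar>f r\<bar> \<le> 2 * M * pker \<gamma> r"
      unfolding f_def using pker_nonneg[OF g0, of r] by (simp add: abs_mult mult_right_mono)
  qed
  have pt: "f (int k) + f (- int k) = pker \<gamma> (int k) * Dl G (real_of_int x / real n) (real k / real n)" for k
  proof -
    have a: "real_of_int (x + int k) / real n = real_of_int x / real n + real k / real n" by (simp add: add_divide_distrib)
    have b: "real_of_int (x + - int k) / real n = real_of_int x / real n - real k / real n" by (simp add: diff_divide_distrib)
    show ?thesis unfolding f_def a b Dl_def pker_sym by (simp add: algebra_simps)
  qed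
  show "(\<lambda>k. pker \<gamma> (int k) * Dl G (real_of_int x / real n) (real k / real n)) summable_on {1..}"
    using sym_split(1)[OF sf] unfolding pt .
  have "Kop \<beta> \<gamma> G G n x = infsum f UNIV"
    unfolding Kop_def Let_def glue_same f_def using b by simp
  also have "\<dots> = f 0 + infsum (\<lambda>k::nat. f (int k) + f (- int k)) {1..}" by (rule sym_split(2)[OF sf])
  also have "\<dots> = infsum (\<lambda>k. pker \<gamma> (int k) * Dl G (real_of_int x / real n) (real k / real n)) {1..}"
    unfolding pt by (simp add: f_def)
  finally show "Kop \<beta> \<gamma> G G n x = infsum (\<lambda>k. pker \<gamma> (int k) * Dl G (real_of_int x / real n) (real k / real n)) {1..}" .
qed

lemma repBpos:
  assumes b: "\<not> \<beta> < 1" and g: "\<gamma> \<ge> 2" and GM: "\<And>v. \<bar>Gp v\<bar> \<le> M" and n: "n \<ge> 1" and x: "x \<ge> 0"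
  shows "(\<lambda>k::nat. pker \<gamma> (int k) * (if k \<le> nat x then Dl Gp (real_of_int x / real n) (real k / real n)
                          else Jf Gp (deriv Gp 0) (real_of_int x / real n) (real k / real n))) summable_on {1..}"
    and "Kop \<beta> \<gamma> Gm Gp n x = infsum (\<lambda>k::nat. pker \<gamma> (int k) * (if k \<le> nat x then Dl Gp (real_of_int x / real n) (real k / real n)
                          else Jf Gp (deriv Gp 0) (real_of_int x / real n) (real k / real n))) {1..}"
proof -
  note HK = halfK[OF g GM, where x=x and m="nat x" and n=n and D="deriv Gp 0"]
  show "(\<lambda>k::nat. pker \<gamma> (int k) * (if k \<le> nat x then Dl Gp (real_of_int x / real n) (real k / real n)
                          else Jf Gp (deriv Gp 0) (real_of_int x / real n) (real k / real n))) summable_on {1..}"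
    by (rule HK(1))
  define gg where "gg = (\<lambda>y. (glue Gm Gp (real_of_int y / real n) - glue Gm Gp (real_of_int x / real n) -
                  deriv Gp 0 * real_of_int (y - x) / real n) * pker \<gamma> (y - x))"
  have "Kop \<beta> \<gamma> Gm Gp n x = infsum gg {0..}"
    unfolding Kop_def Let_def gg_def using b x by simp
  also have "\<dots> = infsum (\<lambda>r. gg (x + r)) {-x..}"
  proof -
    have "bij_betw (\<lambda>r. x + r) {-x..} {0..}"
      by (rule bij_betwI[of _ _ _ "\<lambda>y. y - x"]) auto
    then show ?thesis by (rule infsum_reindex_bij_betw[symmetric])
  qed
  also have "\<dots> = infsum (\<lambda>r. (Gp (real_of_int (x + r) / real n) - Gp (real_of_int x / real n) - deriv Gp 0 * real_of_int r / real n) * pker \<gamma> r) {- int (nat x)..}"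
  proof -
    have e: "{- int (nat x)..} = {-x..}" using x by simp
    show ?thesis unfolding e
    proof (rule infsum_cong)
      fix r assume r: "r \<in> {-x..}"
      have n0: "real n > 0" using n by simp
      have "real_of_int (x + r) / real n \<ge> 0" using r n0 by simp
      moreover have "real_of_int x / real n \<ge> 0" using x n0 by simp
      ultimately show "gg (x + r) = (Gp (real_of_int (x + r) / real n) - Gp (real_of_int x / real n) - deriv Gp 0 * real_of_int r / real n) * pker \<gamma> r"
        unfolding gg_def glue_def by simp
    qed
  qed
  also have "\<dots> = infsum (\<lambda>k::nat. pker \<gamma> (int k) * (if k \<le> nat x then Dl Gp (real_of_int x / real n) (real k / real n)
                          else Jf Gp (deriv Gp 0) (real_of_int x / real n) (real k / real n))) {1..}"
    by (rule HK(2))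
  finally show "Kop \<beta> \<gamma> Gm Gp n x = infsum (\<lambda>k::nat. pker \<gamma> (int k) * (if k \<le> nat x then Dl Gp (real_of_int x / real n) (real k / real n)
                          else Jf Gp (deriv Gp 0) (real_of_int x / real n) (real k / real n))) {1..}" .
qed

lemma repBneg:
  assumes b: "\<not> \<beta> < 1" and g: "\<gamma> \<ge> 2" and GM: "\<And>v. \<bar>Gm v\<bar> \<le> M" and n: "n \<ge> 1" and x: "x < 0"
  defines "H \<equiv> (\<lambda>v. Gm (- v))"
  shows "(\<lambda>k::nat. pker \<gamma> (int k) * (if k \<le> nat (- x) - 1 then Dl H (real_of_int (- x) / real n) (real k / real n)
                          else Jf H (- deriv Gm 0) (real_of_int (- x) / real n) (real k / real n))) summable_on {1..}"
    and "Kop \<beta> \<gamma> Gm Gp n x = infsum (\<lambda>k::nat. pker \<gamma> (int k) * (if k \<le> nat (- x) - 1 then Dl H (real_of_int (- x) / real n) (real k / real n)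
                          else Jf H (- deriv Gm 0) (real_of_int (- x) / real n) (real k / real n))) {1..}"
proof -
  have HM: "\<And>v. \<bar>H v\<bar> \<le> M" unfolding H_def using GM by simp
  define m where "m = nat (- x) - 1"
  have mx: "int m = - x - 1" unfolding m_def using x by simp
  note HK = halfK[OF g HM, where x="- x" and m=m and n=n and D="- deriv Gm 0"]
  show "(\<lambda>k::nat. pker \<gamma> (int k) * (if k \<le> nat (- x) - 1 then Dl H (real_of_int (- x) / real n) (real k / real n)
                          else Jf H (- deriv Gm 0) (real_of_int (- x) / real n) (real k / real n))) summable_on {1..}"
    using HK(1) unfolding m_def .
  define gg where "gg = (\<lambda>y. (glue Gm Gp (real_of_int y / real n) - glue Gm Gp (real_of_int x / real n) -
                  deriv Gm 0 * real_of_int (y - x) / real n) * pker \<gamma> (y - x))"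
  have "Kop \<beta> \<gamma> Gm Gp n x = infsum gg {..-1}"
    unfolding Kop_def Let_def gg_def using b x by simp
  also have "\<dots> = infsum (\<lambda>r. gg (x - r)) {- int m..}"
  proof -
    have "bij_betw (\<lambda>r. x - r) {- int m..} {..-1}"
      by (rule bij_betwI[of _ _ _ "\<lambda>y. x - y"]) (use mx in auto)
    then show ?thesis by (rule infsum_reindex_bij_betw[symmetric])
  qed
  also have "\<dots> = infsum (\<lambda>r. (H (real_of_int (- x + r) / real n) - H (real_of_int (- x) / real n) - (- deriv Gm 0) * real_of_int r / real n) * pker \<gamma> r) {- int m..}"
  proof (rule infsum_cong)
    fix r assume r: "r \<in> {- int m..}"
    have n0: "real n > 0" using n by simp
    have a: "real_of_int (x - r) / real n < 0" using r n0 mx by (simp add: divide_neg_pos)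
    have c: "real_of_int x / real n < 0" using x n0 by (simp add: divide_neg_pos)
    have e1: "Gm (real_of_int (x - r) / real n) = H (real_of_int (- x + r) / real n)"
      unfolding H_def by (simp add: minus_divide_left)
    have e2: "Gm (real_of_int x / real n) = H (real_of_int (- x) / real n)"
      unfolding H_def by simp
    show "gg (x - r) = (H (real_of_int (- x + r) / real n) - H (real_of_int (- x) / real n) - (- deriv Gm 0) * real_of_int r / real n) * pker \<gamma> r"
      unfolding gg_def glue_def using a c e1 e2 pker_sym[of \<gamma> r] by simp
  qed
  also have "\<dots> = infsum (\<lambda>k::nat. pker \<gamma> (int k) * (if k \<le> m then Dl H (real_of_int (- x) / real n) (real k / real n)
                          else Jf H (- deriv Gm 0) (real_of_int (- x) / real n) (real k / real n))) {1..}"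
    by (rule HK(2))
  finally show "Kop \<beta> \<gamma> Gm Gp n x = infsum (\<lambda>k::nat. pker \<gamma> (int k) * (if k \<le> nat (- x) - 1 then Dl H (real_of_int (- x) / real n) (real k / real n)
                          else Jf H (- deriv Gm 0) (real_of_int (- x) / real n) (real k / real n))) {1..}"
    unfolding m_def .
qed

lemma conv_bdd:
  fixes X :: "nat \<Rightarrow> real"
  assumes "X \<longlonglongrightarrow> L"
  shows "\<exists>C. \<forall>n. \<bar>X n\<bar> \<le> C"
proof -
  have "Bseq X" using assms by (intro convergent_imp_Bseq) (auto simp: convergent_def)
  then obtain K where "\<forall>n. norm (X n) \<le> K" by (auto elim: BseqE)
  then show ?thesis by auto
qed

definition Bd :: "real \<Rightarrow> (real \<Rightarrow> real) \<Rightarrow> real \<Rightarrow> real \<Rightarrow> (real \<Rightarrow> real) \<Rightarrow> nat \<Rightarrow> int \<Rightarrow> real" where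
  "Bd \<gamma> H M D0 D2 n x = th \<gamma> n * infsum (\<lambda>k. pker \<gamma> (int k) * Eb H M D0 n x k) {1..}
      + \<bar>th \<gamma> n * Sn \<gamma> n - kappa \<gamma>\<bar> * \<bar>D2 (real_of_int x / real n)\<bar>"

lemma side_bounds:
  assumes g: "\<gamma> \<ge> 2" and N: "nice H D1 D2 D3 M" and D: "\<gamma> > 2 \<or> D0 = 0"
  shows "\<exists>C \<epsilon>. (\<epsilon> \<longlonglongrightarrow> 0) \<and> (\<forall>n\<ge>1. \<forall>x. 0 \<le> Bd \<gamma> H M D0 D2 n x \<and> Bd \<gamma> H M D0 D2 n x \<le> C)
     \<and> (\<forall>n\<ge>1. Bd \<gamma> H M D0 D2 n summable_on UNIV \<and> infsum (Bd \<gamma> H M D0 D2 n) UNIV \<le> real n * \<epsilon> n)"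
proof -
  have g0: "\<gamma> > 0" using g by simp
  have M0: "M \<ge> 0" by (rule nice_M[OF N])
  define \<epsilon> where "\<epsilon> = (\<lambda>n. 13 * M * aseq \<gamma> n + 32 * M * bseq \<gamma> n + 2 * \<bar>D0\<bar> * (th \<gamma> n * dseq \<gamma> n)
                     + 8 * M * \<bar>th \<gamma> n * Sn \<gamma> n - kappa \<gamma>\<bar>)"
  have T: "(\<lambda>n. \<bar>th \<gamma> n * Sn \<gamma> n - kappa \<gamma>\<bar>) \<longlonglongrightarrow> 0"
  proof -
    have "(\<lambda>n. \<bar>th \<gamma> n * Sn \<gamma> n - kappa \<gamma>\<bar>) \<longlonglongrightarrow> \<bar>kappa \<gamma> - kappa \<gamma>\<bar>"
      by (intro tendsto_intros F3[OF g])
    then show ?thesis by simp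
  qed
  have Dd: "(\<lambda>n. 2 * \<bar>D0\<bar> * (th \<gamma> n * dseq \<gamma> n)) \<longlonglongrightarrow> 0"
  proof (cases "D0 = 0")
    case True then show ?thesis by simp
  next
    case False
    then have g2: "\<gamma> > 2" using D by simp
    have "(\<lambda>n. 2 * \<bar>D0\<bar> * (1 * dseq \<gamma> n)) \<longlonglongrightarrow> 2 * \<bar>D0\<bar> * (1 * 0)"
      by (intro tendsto_intros F4[OF g2])
    then show ?thesis using g2 by (simp add: th_def)
  qed
  have e: "\<epsilon> \<longlonglongrightarrow> 0"
  proof -
    have "\<epsilon> \<longlonglongrightarrow> 13 * M * 0 + 32 * M * 0 + 0 + 8 * M * 0"
      unfolding \<epsilon>_def by (intro tendsto_intros F1[OF g] F2[OF g] Dd T)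
    then show ?thesis by simp
  qed
  obtain Ca where Ca: "\<And>n. \<bar>aseq \<gamma> n\<bar> \<le> Ca" using conv_bdd[OF F1[OF g]] by blast
  obtain Cb where Cb: "\<And>n. \<bar>bseq \<gamma> n\<bar> \<le> Cb" using conv_bdd[OF F2[OF g]] by blast
  obtain CT where CT: "\<And>n. \<bar>th \<gamma> n * Sn \<gamma> n\<bar> \<le> CT" using conv_bdd[OF F3[OF g]] by blast
  have "\<exists>Cd. \<forall>n. \<bar>D0\<bar> * dseq \<gamma> n \<le> Cd"
  proof (cases "D0 = 0")
    case True then show ?thesis by auto
  next
    case False
    then have g2: "\<gamma> > 2" using D by simp
    obtain Cd where "\<And>n. \<bar>dseq \<gamma> n\<bar> \<le> Cd" using conv_bdd[OF F4[OF g2]] by blast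
    then have "\<bar>D0\<bar> * dseq \<gamma> n \<le> \<bar>D0\<bar> * Cd" for n
      by (intro mult_left_mono) (auto simp: abs_le_iff)
    then show ?thesis by blast
  qed
  then obtain Cd where Cd: "\<And>n. \<bar>D0\<bar> * dseq \<gamma> n \<le> Cd" by blast
  define C where "C = M * Ca + 5/2 * M * CT + 4 * M * Cb + Cd + (CT + \<bar>kappa \<gamma>\<bar>) * M"
  have sup: "Bd \<gamma> H M D0 D2 n x \<le> C" if n: "n \<ge> 1" for n x
  proof -
    have a: "th \<gamma> n * infsum (\<lambda>k. pker \<gamma> (int k) * Eb H M D0 n x k) {1..}
         \<le> M * aseq \<gamma> n + 5/2 * M * (th \<gamma> n * Sn \<gamma> n) + 4 * M * bseq \<gamma> n + \<bar>D0\<bar> * dseq \<gamma> n"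
      by (rule sup_bound[OF g N n D])
    have b1: "M * aseq \<gamma> n \<le> M * Ca" using Ca[of n] M0 by (intro mult_left_mono) (auto simp: abs_le_iff)
    have b2: "5/2 * M * (th \<gamma> n * Sn \<gamma> n) \<le> 5/2 * M * CT" using CT[of n] M0 by (intro mult_left_mono) (auto simp: abs_le_iff)
    have b3: "4 * M * bseq \<gamma> n \<le> 4 * M * Cb" using Cb[of n] M0 by (intro mult_left_mono) (auto simp: abs_le_iff)
    have c: "\<bar>th \<gamma> n * Sn \<gamma> n - kappa \<gamma>\<bar> * \<bar>D2 (real_of_int x / real n)\<bar> \<le> (CT + \<bar>kappa \<gamma>\<bar>) * M"
    proof (rule mult_mono)
      show "\<bar>th \<gamma> n * Sn \<gamma> n - kappa \<gamma>\<bar> \<le> CT + \<bar>kappa \<gamma>\<bar>" using CT[of n] by linarith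
      show "\<bar>D2 (real_of_int x / real n)\<bar> \<le> M" by (rule nice_D2'[OF N])
    qed (use CT[of n] in auto)
    show ?thesis unfolding Bd_def C_def using a b1 b2 b3 c Cd[of n] by linarith
  qed
  have nn: "0 \<le> Bd \<gamma> H M D0 D2 n x" for n x
    unfolding Bd_def using th_nonneg[of \<gamma> n] pker_nonneg[OF g0] Eb_nonneg[OF M0]
    by (intro add_nonneg_nonneg mult_nonneg_nonneg infsum_nonneg) auto
  have L: "Bd \<gamma> H M D0 D2 n summable_on UNIV \<and> infsum (Bd \<gamma> H M D0 D2 n) UNIV \<le> real n * \<epsilon> n" if n: "n \<ge> 1" for n
  proof -
    have eq: "Bd \<gamma> H M D0 D2 n = (\<lambda>x. th \<gamma> n * infsum (\<lambda>k. pker \<gamma> (int k) * Eb H M D0 n x k) {1..}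
              + \<bar>th \<gamma> n * Sn \<gamma> n - kappa \<gamma>\<bar> * \<bar>D2 (real_of_int x / real n)\<bar>)"
      unfolding Bd_def by (rule ext) simp
    show ?thesis unfolding eq \<epsilon>_def using L1_bound[OF g N n D] by simp
  qed
  show ?thesis using e sup nn L by blast
qed

lemma combine:
  fixes E B :: "nat \<Rightarrow> int \<Rightarrow> real"
  assumes EB: "\<And>n x. n \<ge> 1 \<Longrightarrow> 0 \<le> E n x \<and> E n x \<le> B n x"
    and BL: "\<And>n. n \<ge> 1 \<Longrightarrow> B n summable_on UNIV \<and> infsum (B n) UNIV \<le> real n * \<epsilon> n"
    and e: "\<epsilon> \<longlonglongrightarrow> 0"
  shows "\<forall>n\<ge>1. E n summable_on UNIV" and "(\<lambda>n. (1 / real n) * infsum (E n) UNIV) \<longlonglongrightarrow> 0"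
proof -
  have sE: "E n summable_on UNIV" if n: "n \<ge> 1" for n
    by (rule summable_on_comparison_test[of "B n"]) (use BL[OF n] EB[OF n] in auto)
  then show "\<forall>n\<ge>1. E n summable_on UNIV" by blast
  have up: "(1 / real n) * infsum (E n) UNIV \<le> \<epsilon> n" if n: "n \<ge> 1" for n
  proof -
    have "infsum (E n) UNIV \<le> infsum (B n) UNIV"
      by (rule infsum_mono[OF sE[OF n]]) (use BL[OF n] EB[OF n] in auto)
    also have "\<dots> \<le> real n * \<epsilon> n" using BL[OF n] by simp
    finally have "infsum (E n) UNIV \<le> real n * \<epsilon> n" .
    moreover have "real n > 0" using n by simp
    ultimately show ?thesis by (simp add: field_simps)
  qed
  have lo: "0 \<le> (1 / real n) * infsum (E n) UNIV" if n: "n \<ge> 1" for n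
    using EB[OF n] by (intro mult_nonneg_nonneg infsum_nonneg) auto
  show "(\<lambda>n. (1 / real n) * infsum (E n) UNIV) \<longlonglongrightarrow> 0"
  proof (rule tendsto_sandwich[of "\<lambda>_. 0" _ sequentially \<epsilon>])
    show "\<forall>\<^sub>F n in sequentially. 0 \<le> (1 / real n) * infsum (E n) UNIV"
      by (rule eventually_sequentiallyI[of 1]) (rule lo)
    show "\<forall>\<^sub>F n in sequentially. (1 / real n) * infsum (E n) UNIV \<le> \<epsilon> n"
      by (rule eventually_sequentiallyI[of 1]) (rule up)
  qed (use e in auto)
qed

lemma S_cases:
  assumes "S_class \<alpha> \<beta> \<gamma> Gm Gp"
  shows "(\<beta> < 1 \<and> schwartz Gp \<and> Gm = Gp) \<or>
         (\<not> \<beta> < 1 \<and> schwartz Gm \<and> schwartz Gp \<and> (\<gamma> > 2 \<or> (deriv Gm 0 = 0 \<and> deriv Gp 0 = 0)))"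
proof (cases "\<beta> < 1")
  case True then show ?thesis using assms unfolding S_class_def S_R_def by simp
next
  case False
  show ?thesis
  proof (cases "\<beta> = 1 \<and> \<gamma> > 2")
    case True then show ?thesis using assms False unfolding S_class_def S_Rob_def by auto
  next
    case F2: False
    then have "S_Neu Gm Gp" using assms False unfolding S_class_def by simp
    then have "schwartz Gm" "schwartz Gp" "(deriv ^^ (2*0+1)) Gm 0 = 0" "(deriv ^^ (2*0+1)) Gp 0 = 0"
      unfolding S_Neu_def by blast+
    then show ?thesis using False by simp
  qed
qed

theorem propositionA1:
  fixes \<alpha> \<beta> \<gamma> :: real and Gm Gp :: "real \<Rightarrow> real"
  assumes "\<gamma> \<ge> 2" and "\<alpha> > 0" and "\<beta> \<ge> 0"
    and "S_class \<alpha> \<beta> \<gamma> Gm Gp"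
  shows "(\<exists>C>0. \<forall>n\<ge>1. \<forall>x::int. \<bar>Theta \<gamma> n * Kop \<beta> \<gamma> Gm Gp n x\<bar> \<le> C)
    \<and> (\<forall>n\<ge>1. (\<lambda>x::int. \<bar>Theta \<gamma> n * Kop \<beta> \<gamma> Gm Gp n x
                 - kappa \<gamma> * lapl Gm Gp (real_of_int x / real n)\<bar>) summable_on UNIV)
    \<and> ((\<lambda>n. (1 / real n) * (\<Sum>\<^sub>\<infinity>x\<in>(UNIV::int set).
            \<bar>Theta \<gamma> n * Kop \<beta> \<gamma> Gm Gp n x - kappa \<gamma> * lapl Gm Gp (real_of_int x / real n)\<bar>))
          \<longlonglongrightarrow> 0)"
proof -
  have g: "\<gamma> \<ge> 2" by (rule assms(1))
  define E where "E = (\<lambda>n x. \<bar>Theta \<gamma> n * Kop \<beta> \<gamma> Gm Gp n x - kappa \<gamma> * lapl Gm Gp (real_of_int x / real n)\<bar>)"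
  have main: "\<exists>C B \<epsilon>. (\<forall>n\<ge>1. \<forall>x::int. \<bar>Theta \<gamma> n * Kop \<beta> \<gamma> Gm Gp n x\<bar> \<le> C)
      \<and> (\<forall>n x. n \<ge> 1 \<longrightarrow> 0 \<le> E n x \<and> E n x \<le> B n x)
      \<and> (\<forall>n. n \<ge> 1 \<longrightarrow> B n summable_on UNIV \<and> infsum (B n) UNIV \<le> real n * \<epsilon> n)
      \<and> (\<epsilon> \<longlonglongrightarrow> 0)"
  proof -
    from S_cases[OF assms(4)] show ?thesis
    proof
      assume A: "\<beta> < 1 \<and> schwartz Gp \<and> Gm = Gp"
      then have b: "\<beta> < 1" and sp: "schwartz Gp" and GmGp: "Gm = Gp" by auto
      obtain M where N: "nice Gp (deriv Gp) (deriv (deriv Gp)) (deriv (deriv (deriv Gp))) M"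
        using schwartz_nice[OF sp] by blast
      obtain C \<epsilon> where SB: "\<epsilon> \<longlonglongrightarrow> 0" "\<forall>n\<ge>1. \<forall>x. 0 \<le> Bd \<gamma> Gp M 0 (deriv (deriv Gp)) n x \<and> Bd \<gamma> Gp M 0 (deriv (deriv Gp)) n x \<le> C"
        "\<forall>n\<ge>1. Bd \<gamma> Gp M 0 (deriv (deriv Gp)) n summable_on UNIV \<and> infsum (Bd \<gamma> Gp M 0 (deriv (deriv Gp)) n) UNIV \<le> real n * \<epsilon> n"
        using side_bounds[OF g N, of 0] by auto
      have EB: "E n x \<le> Bd \<gamma> Gp M 0 (deriv (deriv Gp)) n x" if n: "n \<ge> 1" for n x
      proof -
        let ?u = "real_of_int x / real n"
        have K: "Kop \<beta> \<gamma> Gm Gp n x = infsum (\<lambda>k. pker \<gamma> (int k) * Dl Gp ?u (real k / real n)) {1..}"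
          unfolding GmGp by (rule repA(2)[OF b g nice_H'[OF N]])
        have sK: "(\<lambda>k. pker \<gamma> (int k) * Dl Gp ?u (real k / real n)) summable_on {1..}"
          by (rule repA(1)[OF b g nice_H'[OF N]])
        have L: "lapl Gm Gp ?u = deriv (deriv Gp) ?u" unfolding lapl_def GmGp by simp
        have "\<bar>Theta \<gamma> n * infsum (\<lambda>k. pker \<gamma> (int k) * Dl Gp ?u (real k / real n)) {1..} - kappa \<gamma> * deriv (deriv Gp) ?u\<bar>
              \<le> Bd \<gamma> Gp M 0 (deriv (deriv Gp)) n x"
          unfolding Bd_def by (rule err_bound(2)[OF g N n refl _ sK]) simp
        then show ?thesis unfolding E_def K L .
      qed
      define C' where "C' = C + \<bar>kappa \<gamma>\<bar> * M"
      have sup: "\<bar>Theta \<gamma> n * Kop \<beta> \<gamma> Gm Gp n x\<bar> \<le> C'" if n: "n \<ge> 1" for n x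
      proof -
        have l: "\<bar>kappa \<gamma> * lapl Gm Gp (real_of_int x / real n)\<bar> \<le> \<bar>kappa \<gamma>\<bar> * M"
          unfolding lapl_def GmGp abs_mult by (intro mult_left_mono) (auto intro: nice_D2'[OF N])
        have "Bd \<gamma> Gp M 0 (deriv (deriv Gp)) n x \<le> C" using SB(2) n by blast
        then have "E n x \<le> C" using EB[OF n, of x] by linarith
        then show ?thesis using l unfolding E_def C'_def by linarith
      qed
      show ?thesis
      proof (intro exI[of _ C'] exI[of _ "Bd \<gamma> Gp M 0 (deriv (deriv Gp))"] exI[of _ \<epsilon>] conjI)
        show "\<forall>n\<ge>1. \<forall>x. \<bar>Theta \<gamma> n * Kop \<beta> \<gamma> Gm Gp n x\<bar> \<le> C'" using sup by blast
        show "\<forall>n x. n \<ge> 1 \<longrightarrow> 0 \<le> E n x \<and> E n x \<le> Bd \<gamma> Gp M 0 (deriv (deriv Gp)) n x"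
        proof (intro allI impI conjI)
          fix n :: nat and x :: int assume n: "n \<ge> 1"
          show "0 \<le> E n x" unfolding E_def by simp
          show "E n x \<le> Bd \<gamma> Gp M 0 (deriv (deriv Gp)) n x" by (rule EB[OF n])
        qed
        show "\<forall>n. n \<ge> 1 \<longrightarrow> Bd \<gamma> Gp M 0 (deriv (deriv Gp)) n summable_on UNIV \<and> infsum (Bd \<gamma> Gp M 0 (deriv (deriv Gp)) n) UNIV \<le> real n * \<epsilon> n"
          using SB(3) by blast
        show "\<epsilon> \<longlonglongrightarrow> 0" by (rule SB(1))
      qed
    next
      assume B: "\<not> \<beta> < 1 \<and> schwartz Gm \<and> schwartz Gp \<and> (\<gamma> > 2 \<or> (deriv Gm 0 = 0 \<and> deriv Gp 0 = 0))"
      then have b: "\<not> \<beta> < 1" and sm: "schwartz Gm" and sp: "schwartz Gp"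
        and D: "\<gamma> > 2 \<or> (deriv Gm 0 = 0 \<and> deriv Gp 0 = 0)" by auto
      obtain Mp where Np: "nice Gp (deriv Gp) (deriv (deriv Gp)) (deriv (deriv (deriv Gp))) Mp"
        using schwartz_nice[OF sp] by blast
      obtain Mm where Nm: "nice Gm (deriv Gm) (deriv (deriv Gm)) (deriv (deriv (deriv Gm))) Mm"
        using schwartz_nice[OF sm] by blast
      define H where "H = (\<lambda>v. Gm (- v))"
      define D2H where "D2H = (\<lambda>v. deriv (deriv Gm) (- v))"
      have NH: "nice H (\<lambda>v. - deriv Gm (- v)) D2H (\<lambda>v. - deriv (deriv (deriv Gm)) (- v)) Mm"
        unfolding H_def D2H_def by (rule nice_mirror[OF Nm])
      have Dp: "\<gamma> > 2 \<or> deriv Gp 0 = 0" using D by auto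
      have Dm: "\<gamma> > 2 \<or> - deriv Gm 0 = 0" using D by auto
      obtain CP \<epsilon>P where SP: "\<epsilon>P \<longlonglongrightarrow> 0" "\<forall>n\<ge>1. \<forall>x. 0 \<le> Bd \<gamma> Gp Mp (deriv Gp 0) (deriv (deriv Gp)) n x \<and> Bd \<gamma> Gp Mp (deriv Gp 0) (deriv (deriv Gp)) n x \<le> CP"
        "\<forall>n\<ge>1. Bd \<gamma> Gp Mp (deriv Gp 0) (deriv (deriv Gp)) n summable_on UNIV \<and> infsum (Bd \<gamma> Gp Mp (deriv Gp 0) (deriv (deriv Gp)) n) UNIV \<le> real n * \<epsilon>P n"
        using side_bounds[OF g Np Dp] by auto
      obtain CH \<epsilon>H where SH: "\<epsilon>H \<longlonglongrightarrow> 0" "\<forall>n\<ge>1. \<forall>x. 0 \<le> Bd \<gamma> H Mm (- deriv Gm 0) D2H n x \<and> Bd \<gamma> H Mm (- deriv Gm 0) D2H n x \<le> CH"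
        "\<forall>n\<ge>1. Bd \<gamma> H Mm (- deriv Gm 0) D2H n summable_on UNIV \<and> infsum (Bd \<gamma> H Mm (- deriv Gm 0) D2H n) UNIV \<le> real n * \<epsilon>H n"
        using side_bounds[OF g NH Dm] by auto
      define BP where "BP = Bd \<gamma> Gp Mp (deriv Gp 0) (deriv (deriv Gp))"
      define BH where "BH = Bd \<gamma> H Mm (- deriv Gm 0) D2H"
      have EB: "E n x \<le> BP n x + BH n (- x)" if n: "n \<ge> 1" for n x
      proof (cases "x \<ge> 0")
        case True
        let ?u = "real_of_int x / real n"
        define \<phi> where "\<phi> = (\<lambda>k::nat. if k \<le> nat x then Dl Gp ?u (real k / real n) else Jf Gp (deriv Gp 0) ?u (real k / real n))"
        have K: "Kop \<beta> \<gamma> Gm Gp n x = infsum (\<lambda>k. pker \<gamma> (int k) * \<phi> k) {1..}"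
          unfolding \<phi>_def by (rule repBpos(2)[OF b g nice_H'[OF Np] n True])
        have sK: "(\<lambda>k. pker \<gamma> (int k) * \<phi> k) summable_on {1..}"
          unfolding \<phi>_def by (rule repBpos(1)[OF b g nice_H'[OF Np] n True])
        have phi: "\<phi> k = Dl Gp ?u (real k / real n) \<or> (\<phi> k = Jf Gp (deriv Gp 0) ?u (real k / real n) \<and> 0 \<le> x \<and> x \<le> int k \<and> deriv Gp 0 = deriv Gp 0)" for k
          unfolding \<phi>_def using True by auto
        have L: "lapl Gm Gp ?u = deriv (deriv Gp) ?u"
        proof -
          have "?u \<ge> 0" using True n by simp
          then have "\<not> ?u < 0" by linarith
          then show ?thesis unfolding lapl_def by simp
        qed
        have "\<bar>Theta \<gamma> n * infsum (\<lambda>k. pker \<gamma> (int k) * \<phi> k) {1..} - kappa \<gamma> * deriv (deriv Gp) ?u\<bar> \<le> BP n x"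
          unfolding BP_def Bd_def by (rule err_bound(2)[OF g Np n refl phi sK])
        moreover have "BH n (- x) \<ge> 0" using SH(2) n unfolding BH_def by blast
        ultimately show ?thesis unfolding E_def K L by linarith
      next
        case False
        let ?u = "real_of_int (- x) / real n"
        define \<phi> where "\<phi> = (\<lambda>k::nat. if k \<le> nat (- x) - 1 then Dl H ?u (real k / real n) else Jf H (- deriv Gm 0) ?u (real k / real n))"
        have xn: "x < 0" using False by simp
        have K: "Kop \<beta> \<gamma> Gm Gp n x = infsum (\<lambda>k. pker \<gamma> (int k) * \<phi> k) {1..}"
          unfolding \<phi>_def H_def by (rule repBneg(2)[OF b g nice_H'[OF Nm] n xn])
        have sK: "(\<lambda>k. pker \<gamma> (int k) * \<phi> k) summable_on {1..}"
          unfolding \<phi>_def H_def by (rule repBneg(1)[OF b g nice_H'[OF Nm] n xn])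
        have phi: "\<phi> k = Dl H ?u (real k / real n) \<or> (\<phi> k = Jf H ((\<lambda>v. - deriv Gm (- v)) 0) ?u (real k / real n) \<and> 0 \<le> - x \<and> - x \<le> int k \<and> - deriv Gm 0 = (\<lambda>v. - deriv Gm (- v)) 0)" for k
        proof (cases "k \<le> nat (- x) - 1")
          case True then show ?thesis unfolding \<phi>_def by simp
        next
          case False
          have gen: "\<And>m::nat. \<not> k \<le> m - 1 \<Longrightarrow> m \<le> k" by arith
          have "nat (- x) \<le> k" by (rule gen[OF False])
          then have k: "- x \<le> int k" using xn by linarith
          show ?thesis unfolding \<phi>_def using False xn k by simp
        qed
        have L: "lapl Gm Gp (real_of_int x / real n) = D2H ?u"
        proof -
          have "real_of_int x / real n < 0" by (rule divide_neg_pos) (use xn n in auto)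
          moreover have "- ?u = real_of_int x / real n" by simp
          ultimately show ?thesis unfolding lapl_def D2H_def by simp
        qed
        have "\<bar>Theta \<gamma> n * infsum (\<lambda>k. pker \<gamma> (int k) * \<phi> k) {1..} - kappa \<gamma> * D2H ?u\<bar> \<le> BH n (- x)"
          unfolding BH_def Bd_def by (rule err_bound(2)[OF g NH n refl phi sK])
        moreover have "BP n x \<ge> 0" using SP(2) n unfolding BP_def by blast
        ultimately show ?thesis unfolding E_def K L by linarith
      qed
      define C' where "C' = CP + CH + \<bar>kappa \<gamma>\<bar> * (Mp + Mm)"
      have sup: "\<bar>Theta \<gamma> n * Kop \<beta> \<gamma> Gm Gp n x\<bar> \<le> C'" if n: "n \<ge> 1" for n x
      proof -
        have lm: "\<bar>lapl Gm Gp (real_of_int x / real n)\<bar> \<le> Mp + Mm"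
          unfolding lapl_def using nice_D2'[OF Np] nice_D2'[OF Nm] nice_M[OF Np] nice_M[OF Nm]
          by (auto intro: order_trans add_increasing2 add_increasing)
        have l: "\<bar>kappa \<gamma> * lapl Gm Gp (real_of_int x / real n)\<bar> \<le> \<bar>kappa \<gamma>\<bar> * (Mp + Mm)"
          unfolding abs_mult by (rule mult_left_mono[OF lm]) simp
        have "BP n x \<le> CP" using SP(2) n unfolding BP_def by blast
        moreover have "BH n (- x) \<le> CH" using SH(2) n unfolding BH_def by blast
        ultimately have "E n x \<le> CP + CH" using EB[OF n, of x] by linarith
        then show ?thesis using l unfolding E_def C'_def by linarith
      qed
      define B' where "B' = (\<lambda>n x. BP n x + BH n (- x))"
      have bij: "bij_betw (\<lambda>x::int. - x) UNIV UNIV" by (rule bij_betwI[of _ _ _ "\<lambda>x. - x"]) auto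
      have L1: "B' n summable_on UNIV \<and> infsum (B' n) UNIV \<le> real n * (\<epsilon>P n + \<epsilon>H n)" if n: "n \<ge> 1" for n
      proof -
        have s1: "BP n summable_on UNIV" using SP(3) n unfolding BP_def by blast
        have s2': "BH n summable_on UNIV" using SH(3) n unfolding BH_def by blast
        have s2: "(\<lambda>x. BH n (- x)) summable_on UNIV"
          using summable_on_reindex_bij_betw[OF bij, of "BH n"] s2' by simp
        have i2: "infsum (\<lambda>x. BH n (- x)) UNIV = infsum (BH n) UNIV"
          by (rule infsum_reindex_bij_betw[OF bij])
        have "infsum (B' n) UNIV = infsum (BP n) UNIV + infsum (BH n) UNIV"
          unfolding B'_def infsum_add[OF s1 s2] i2 ..
        also have "\<dots> \<le> real n * \<epsilon>P n + real n * \<epsilon>H n"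
          using SP(3) SH(3) n unfolding BP_def BH_def by (intro add_mono) blast+
        finally have "infsum (B' n) UNIV \<le> real n * (\<epsilon>P n + \<epsilon>H n)" by (simp add: algebra_simps)
        moreover have "B' n summable_on UNIV" unfolding B'_def by (rule summable_on_add[OF s1 s2])
        ultimately show ?thesis by simp
      qed
      show ?thesis
      proof (intro exI[of _ C'] exI[of _ B'] exI[of _ "\<lambda>n. \<epsilon>P n + \<epsilon>H n"] conjI)
        show "\<forall>n\<ge>1. \<forall>x. \<bar>Theta \<gamma> n * Kop \<beta> \<gamma> Gm Gp n x\<bar> \<le> C'" using sup by blast
        show "\<forall>n x. n \<ge> 1 \<longrightarrow> 0 \<le> E n x \<and> E n x \<le> B' n x"
        proof (intro allI impI conjI)
          fix n :: nat and x :: int assume n: "n \<ge> 1"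
          show "0 \<le> E n x" unfolding E_def by simp
          show "E n x \<le> B' n x" unfolding B'_def by (rule EB[OF n])
        qed
        show "\<forall>n. n \<ge> 1 \<longrightarrow> B' n summable_on UNIV \<and> infsum (B' n) UNIV \<le> real n * (\<epsilon>P n + \<epsilon>H n)"
          using L1 by blast
        show "(\<lambda>n. \<epsilon>P n + \<epsilon>H n) \<longlonglongrightarrow> 0" using tendsto_add[OF SP(1) SH(1)] by simp
      qed
    qed
  qed
  then obtain C B \<epsilon> where C: "\<forall>n\<ge>1. \<forall>x::int. \<bar>Theta \<gamma> n * Kop \<beta> \<gamma> Gm Gp n x\<bar> \<le> C"
    and EB: "\<forall>n x. n \<ge> 1 \<longrightarrow> 0 \<le> E n x \<and> E n x \<le> B n x"
    and BL: "\<forall>n. n \<ge> 1 \<longrightarrow> B n summable_on UNIV \<and> infsum (B n) UNIV \<le> real n * \<epsilon> n"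
    and e: "\<epsilon> \<longlonglongrightarrow> 0" by blast
  note CB = combine[of E B \<epsilon>, OF _ _ e]
  have c1: "\<forall>n\<ge>1. E n summable_on UNIV" by (rule CB(1)) (use EB BL in auto)
  have c2: "(\<lambda>n. (1 / real n) * infsum (E n) UNIV) \<longlonglongrightarrow> 0" by (rule CB(2)) (use EB BL in auto)
  have c0: "\<exists>C>0. \<forall>n\<ge>1. \<forall>x::int. \<bar>Theta \<gamma> n * Kop \<beta> \<gamma> Gm Gp n x\<bar> \<le> C"
  proof (intro exI[of _ "max 1 C"] conjI allI impI)
    fix n :: nat and x :: int assume "n \<ge> 1"
    then show "\<bar>Theta \<gamma> n * Kop \<beta> \<gamma> Gm Gp n x\<bar> \<le> max 1 C" using C by (meson max.coboundedI2)
  qed simp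
  show ?thesis using c0 c1 c2 unfolding E_def by simp
qed


end
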